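(* Fix an integer $n\ge 0$ and $\mathbb K\in\{\mathbb R,\mathbb C\}$. Let $\mathcal B^0\supset\mathcal B^1\supset\cdots\supset\mathcal B^{n+1}$ be linear subspaces, and let $\mathcal L=\mathcal L_0,\dots,\mathcal L_n$ and $\mathcal L(\epsilon,\cdot):\mathcal B^0\to\mathcal B^0$ ($\epsilon\in(0,1)$) be linear operators satisfying conditions (I), (II), (III) of the context. Assume also: (a) each $\mathcal B^k$ is a Banach space (with norm $\|\cdot\|_{\mathcal B^k}$); (b) $\nu$ is a bounded linear functional on $\mathcal B^0$, $\mathcal L_j$ is a bounded operator $\mathcal B^i\to\mathcal B^{i-j}$ for $j=0,\dots,n$ and $i=j,\dots,n+1$, $\sup_{\epsilon}\|\kappa(\epsilon,\cdot)\|_{\mathcal B^0\to\mathbb K}<+\infty$, and $\mathcal R_\lambda$ is bounded as an operator $\mathcal B^1\to\mathcal B^0$ and as an operator $\mathcal B^j\to\mathcal B^j$ for $j=1,\dots,n+1$; (c) $\lim_{\epsilon\to0}\|\tilde{\mathcal L}_j(\epsilon,\cdot)\|_{\mathcal B^{j+1}\to\mathcal B^0}=0$ for each $j=0,\dots,n$. Put $\|f\|_k:=\max_{1\le i\le k}\|f\|_{\mathcal B^i}$ and $\mathcal B^k_1:=(\mathcal B^k,\|\cdot\|_k)$. Then each $\kappa_k$ is a bounded linear functional on $\mathcal B^k_1$ and $\|\tilde\kappa_k(\epsilon,\cdot)\|_{\mathcal B_1^{k+1}\to\mathbb K}\to0$ as $\epsilon\to0$ for each $0\le k\le n$. Moreover,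 if there is $1_{\mathcal B}\in\mathcal B^{n+1}$ with $\nu(1_{\mathcal B})=\nu(\epsilon,1_{\mathcal B})=1$ for all $\epsilon$ and $\sup_\epsilon|\nu(\epsilon,h)|<+\infty$, then each $\nu_k$ is a bounded linear functional on $\mathcal B^k_1$ and $\|\tilde\nu_k(\epsilon,\cdot)\|_{\mathcal B_1^{k+1}\to\mathbb K}\to0$.
   Context: Conditions. (I) For each $j=0,\dots,n$ and $i=j,\dots,n$, $\mathcal L_j$ maps $\mathcal B^i$ linearly into $\mathcal B^{i-j}$. (II) $\mathcal L:\mathcal B^0\to\mathcal B^0$ decomposes as $\mathcal L=\lambda(h\otimes\nu)+\mathcal R$ with $(\lambda,h,\nu)\in\mathbb K\times\mathcal B^{n+1}\times(\mathcal B^0)^*$ ($(\mathcal B^0)^*$ = linear functionals), $\lambda\neq0$, $\nu\circ\mathcal L=\lambda\nu$, $\mathcal Lh=\lambda h$, $\nu(h)=1$, where $(h\otimes\nu)f=\nu(f)h$; and there is a linear subspace $\mathcal D^0$ with $\mathcal B^1\subset\mathcal D^0\subset\mathcal B^0$ such that every $f\in\mathcal D^0$ has exactly one $g\in\mathcal B^0$ with $(\mathcal R-\lambda\mathcal I)g=f$; this inverse $\mathcal R_\lambda:\mathcal D^0\to\mathcal B^0$ satisfies $\mathcal R_\lambda\mathcal B^i\subset\mathcal B^i$ for $1\le i\le n+1$. (III) For each $\epsilon$ there are $\lambda(\epsilon)\in\mathbb K$, $\nu(\epsilon,\cdot)\in(\mathcal B^0)^*$ with $\nu(\epsilon,\mathcal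 L(\epsilon,f))=\lambda(\epsilon)\nu(\epsilon,f)$ for all $f$ and $\nu(\epsilon,h)\ne0$. Notation. $\tilde{\mathcal L}_j(\epsilon,\cdot):=(\mathcal L(\epsilon,\cdot)-\mathcal L-\sum_{i=1}^j\mathcal L_i\epsilon^i)/\epsilon^j$; $\kappa(\epsilon,f):=\nu(\epsilon,f)/\nu(\epsilon,h)$. Coefficients: $\kappa_0=\nu$, and recursively for $k\ge1$, $\lambda_k=\sum_{j=1}^k\kappa_{k-j}(\mathcal L_jh)$, $\kappa_k(f)=\sum_{j=1}^k\kappa_{k-j}((\lambda_j\mathcal I-\mathcal L_j)\mathcal R_\lambda f)$. Remainders, for $0\le k\le n$: $\tilde\lambda_k(\epsilon):=(\lambda(\epsilon)-\lambda-\sum_{i=1}^k\lambda_i\epsilon^i)/\epsilon^k$ and $\tilde\kappa_k(\epsilon,f):=(\kappa(\epsilon,f)-\nu(f)-\sum_{i=1}^k\kappa_i(f)\epsilon^i)/\epsilon^k$ for $f\in\mathcal B^{k+1}$. Given $1_{\mathcal B}$, set $\nu_0=\nu$ and $\nu_k=\kappa_k+\sum_{i=1}^k\Big(\sum_{l=1}^i\sum_{\substack{j_1,\dots,j_l\ge1\\ j_1+\cdots+j_l=i}}(-1)^l\kappa_{j_1}(1_{\mathcal B})\cdots\kappa_{j_l}(1_{\mathcal B})\Big)\kappa_{k-i}$, and $\tilde\nu_k(\epsilon,f):=(\nu(\epsilon,f)-\sum_{i=0}^k\nu_i(f)\epsilon^i)/\epsilon^k$. $\|\cdot\|_{X\to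 Y}$ denotes operator norm. *)

theory Defs
  imports Complex_Main
begin

text \<open>A vector space over the scalar field 'k is given by the carrier type 'v
 (an abelian group) together with a scalar multiplication sc satisfying
 vector_space sc.  Subspaces carry their own norms N :: 'v => real.\<close>

definition lin_on :: "('k \<Rightarrow> 'v \<Rightarrow> 'v) \<Rightarrow> ('k \<Rightarrow> 'w \<Rightarrow> 'w) \<Rightarrow> 'v set
    \<Rightarrow> ('v::ab_group_add \<Rightarrow> 'w::ab_group_add) \<Rightarrow> bool" where
  "lin_on sc1 sc2 S f \<longleftrightarrow> (\<forall>x\<in>S. \<forall>y\<in>S. f (x + y) = f x + f y) \<and>
      (\<forall>c. \<forall>x\<in>S. f (sc1 c x) = sc2 c (f x))"

definition banach_on :: "('k::real_normed_field \<Rightarrow> 'v::ab_group_add \<Rightarrow> 'v) \<Rightarrow> 'v set \<Rightarrow> ('v \<Rightarrow> real) \<Rightarrow> bool" where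
  "banach_on sc S N \<longleftrightarrow> module.subspace sc S \<and>
     (\<forall>x\<in>S. 0 \<le> N x) \<and> (\<forall>x\<in>S. N x = 0 \<longrightarrow> x = 0) \<and>
     (\<forall>c. \<forall>x\<in>S. N (sc c x) = norm c * N x) \<and>
     (\<forall>x\<in>S. \<forall>y\<in>S. N (x + y) \<le> N x + N y) \<and>
     (\<forall>X::nat \<Rightarrow> 'v. (\<forall>m. X m \<in> S) \<and> (\<forall>e>0. \<exists>M. \<forall>p\<ge>M. \<forall>q\<ge>M. N (X p - X q) < e)
          \<longrightarrow> (\<exists>x\<in>S. \<forall>e>0. \<exists>M. \<forall>p\<ge>M. N (X p - x) < e))"

definition bounded_op :: "('k \<Rightarrow> 'v \<Rightarrow> 'v) \<Rightarrow> ('k \<Rightarrow> 'w \<Rightarrow> 'w) \<Rightarrow> 'v set \<Rightarrow> ('v \<Rightarrow> real)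
    \<Rightarrow> 'w set \<Rightarrow> ('w \<Rightarrow> real) \<Rightarrow> ('v::ab_group_add \<Rightarrow> 'w::ab_group_add) \<Rightarrow> bool" where
  "bounded_op sc1 sc2 S1 N1 S2 N2 f \<longleftrightarrow> lin_on sc1 sc2 S1 f \<and> f ` S1 \<subseteq> S2 \<and>
     (\<exists>C. \<forall>x\<in>S1. N2 (f x) \<le> C * N1 x)"

definition bounded_functional :: "('k::real_normed_field \<Rightarrow> 'v::ab_group_add \<Rightarrow> 'v) \<Rightarrow> 'v set \<Rightarrow> ('v \<Rightarrow> real)
    \<Rightarrow> ('v \<Rightarrow> 'k) \<Rightarrow> bool" where
  "bounded_functional sc S N f \<longleftrightarrow> bounded_op sc (*) S N UNIV norm f"

definition opnorm_le :: "'v set \<Rightarrow> ('v \<Rightarrow> real) \<Rightarrow> ('w \<Rightarrow> real) \<Rightarrow> ('v \<Rightarrow> 'w) \<Rightarrow> real \<Rightarrow> bool" where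
  "opnorm_le S N1 N2 f c \<longleftrightarrow> (\<forall>x\<in>S. N2 (f x) \<le> c * N1 x)"

definition opnorm_tendsto_0 :: "'v set \<Rightarrow> ('v \<Rightarrow> real) \<Rightarrow> ('w \<Rightarrow> real) \<Rightarrow> (real \<Rightarrow> 'v \<Rightarrow> 'w) \<Rightarrow> bool" where
  "opnorm_tendsto_0 S N1 N2 F \<longleftrightarrow> (\<forall>e>0. eventually (\<lambda>eps. opnorm_le S N1 N2 (F eps) e) (at_right 0))"

definition normk :: "(nat \<Rightarrow> 'v \<Rightarrow> real) \<Rightarrow> nat \<Rightarrow> 'v \<Rightarrow> real" where
  "normk N k f = (if k = 0 then N 0 f else Max ((\<lambda>i. N i f) ` {1..k}))"

text \<open>The remainder operator R = L - lambda (h tensor nu) and its resolvent R_lambda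
  (the unique g with (R - lambda I) g = f).\<close>
definition Rop :: "('k \<Rightarrow> 'v \<Rightarrow> 'v) \<Rightarrow> ('v \<Rightarrow> 'v) \<Rightarrow> 'k \<Rightarrow> 'v \<Rightarrow> ('v \<Rightarrow> 'k) \<Rightarrow> 'v \<Rightarrow> 'v::ab_group_add" where
  "Rop sc L0 lam h nu g = L0 g - sc lam (sc (nu g) h)"

definition Rlam :: "('k \<Rightarrow> 'v \<Rightarrow> 'v) \<Rightarrow> ('v \<Rightarrow> 'v) \<Rightarrow> 'k \<Rightarrow> 'v \<Rightarrow> ('v \<Rightarrow> 'k) \<Rightarrow> 'v \<Rightarrow> 'v::ab_group_add" where
  "Rlam sc L0 lam h nu f = (THE g. Rop sc L0 lam h nu g - sc lam g = f)"

text \<open>The coefficients kappa_k (with Rl = R_lambda), lambda_k inlined: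
  kappa_0 = nu, kappa_k f = sum_{j=1..k} kappa_{k-j}((lambda_j I - L_j) R_lambda f),
  lambda_j = sum_{i=1..j} kappa_{j-i}(L_i h).\<close>
function kap :: "('k::field \<Rightarrow> 'v \<Rightarrow> 'v) \<Rightarrow> (nat \<Rightarrow> 'v \<Rightarrow> 'v::ab_group_add) \<Rightarrow> 'v \<Rightarrow> ('v \<Rightarrow> 'k)
    \<Rightarrow> ('v \<Rightarrow> 'v) \<Rightarrow> nat \<Rightarrow> 'v \<Rightarrow> 'k" where
  "kap sc L h nu Rl k f = (if k = 0 then nu f else
     (\<Sum>j=1..k. kap sc L h nu Rl (k - j)
        (sc (\<Sum>i=1..j. kap sc L h nu Rl (j - i) (L i h)) (Rl f) - L j (Rl f))))"
  by pat_completeness auto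
termination
  by (relation "measure (\<lambda>(sc, L, h, nu, Rl, k, f). k)") auto

definition lamk :: "('k::field \<Rightarrow> 'v \<Rightarrow> 'v) \<Rightarrow> (nat \<Rightarrow> 'v \<Rightarrow> 'v::ab_group_add) \<Rightarrow> 'v \<Rightarrow> ('v \<Rightarrow> 'k)
    \<Rightarrow> ('v \<Rightarrow> 'v) \<Rightarrow> nat \<Rightarrow> 'k" where
  "lamk sc L h nu Rl j = (\<Sum>i=1..j. kap sc L h nu Rl (j - i) (L i h))"

definition compositions :: "nat \<Rightarrow> nat \<Rightarrow> nat list set" where
  "compositions i l = {js. length js = l \<and> (\<forall>j\<in>set js. 1 \<le> j) \<and> sum_list js = i}"

definition nuk :: "('k::field \<Rightarrow> 'v \<Rightarrow> 'v) \<Rightarrow> (nat \<Rightarrow> 'v \<Rightarrow> 'v::ab_group_add) \<Rightarrow> 'v \<Rightarrow> ('v \<Rightarrow> 'k)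
    \<Rightarrow> ('v \<Rightarrow> 'v) \<Rightarrow> 'v \<Rightarrow> nat \<Rightarrow> 'v \<Rightarrow> 'k" where
  "nuk sc L h nu Rl one k f = kap sc L h nu Rl k f +
     (\<Sum>i=1..k. (\<Sum>l=1..i. \<Sum>js\<in>compositions i l.
        (-1) ^ l * prod_list (map (\<lambda>j. kap sc L h nu Rl j one) js)) * kap sc L h nu Rl (k - i) f)"


definition kappa_eps :: "(real \<Rightarrow> 'v \<Rightarrow> 'k::field) \<Rightarrow> 'v \<Rightarrow> real \<Rightarrow> 'v \<Rightarrow> 'k" where
  "kappa_eps nueps h eps f = nueps eps f / nueps eps h"

definition tildeL :: "('k::real_normed_field \<Rightarrow> 'v \<Rightarrow> 'v) \<Rightarrow> (nat \<Rightarrow> 'v \<Rightarrow> 'v::ab_group_add)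
    \<Rightarrow> (real \<Rightarrow> 'v \<Rightarrow> 'v) \<Rightarrow> nat \<Rightarrow> real \<Rightarrow> 'v \<Rightarrow> 'v" where
  "tildeL sc L Leps j eps f = sc (inverse (of_real eps ^ j))
      (Leps eps f - L 0 f - (\<Sum>i=1..j. sc (of_real eps ^ i) (L i f)))"

definition tildekappa :: "('k::real_normed_field \<Rightarrow> 'v \<Rightarrow> 'v) \<Rightarrow> (nat \<Rightarrow> 'v \<Rightarrow> 'v::ab_group_add)
    \<Rightarrow> 'v \<Rightarrow> ('v \<Rightarrow> 'k) \<Rightarrow> ('v \<Rightarrow> 'v) \<Rightarrow> (real \<Rightarrow> 'v \<Rightarrow> 'k) \<Rightarrow> nat \<Rightarrow> real \<Rightarrow> 'v \<Rightarrow> 'k" where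
  "tildekappa sc L h nu Rl nueps k eps f =
     (kappa_eps nueps h eps f - nu f - (\<Sum>i=1..k. kap sc L h nu Rl i f * of_real eps ^ i))
       / of_real eps ^ k"

definition tildenu :: "('k::real_normed_field \<Rightarrow> 'v \<Rightarrow> 'v) \<Rightarrow> (nat \<Rightarrow> 'v \<Rightarrow> 'v::ab_group_add)
    \<Rightarrow> 'v \<Rightarrow> ('v \<Rightarrow> 'k) \<Rightarrow> ('v \<Rightarrow> 'v) \<Rightarrow> 'v \<Rightarrow> (real \<Rightarrow> 'v \<Rightarrow> 'k) \<Rightarrow> nat \<Rightarrow> real \<Rightarrow> 'v \<Rightarrow> 'k" where
  "tildenu sc L h nu Rl one nueps k eps f =
     (nueps eps f - (\<Sum>i=0..k. nuk sc L h nu Rl one i f * of_real eps ^ i)) / of_real eps ^ k"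

end

theory Submission
  imports Defs
begin


lemma ev01: "eventually (\<lambda>eps::real. 0 < eps \<and> eps < 1) (at_right 0)"
  unfolding eventually_at_right[OF zero_less_one] by (rule exI[of _ 1]) auto

definition small :: "'v set \<Rightarrow> ('v \<Rightarrow> real) \<Rightarrow> (real \<Rightarrow> 'v \<Rightarrow> 'k::real_normed_field) \<Rightarrow> bool" where
  "small S M F \<longleftrightarrow> (\<forall>e>0. eventually (\<lambda>eps. \<forall>x\<in>S. norm (F eps x) \<le> e * M x) (at_right 0))"
definition ebnd :: "'v set \<Rightarrow> ('v \<Rightarrow> real) \<Rightarrow> (real \<Rightarrow> 'v \<Rightarrow> 'k::real_normed_field) \<Rightarrow> bool" where
  "ebnd S M F \<longleftrightarrow> (\<exists>C. eventually (\<lambda>eps. \<forall>x\<in>S. norm (F eps x) \<le> C * M x) (at_right 0))"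
definition small0 :: "(real \<Rightarrow> 'k::real_normed_field) \<Rightarrow> bool" where
  "small0 a \<longleftrightarrow> (\<forall>e>0. eventually (\<lambda>eps. norm (a eps) \<le> e) (at_right 0))"
definition bnd0 :: "(real \<Rightarrow> 'k::real_normed_field) \<Rightarrow> bool" where
  "bnd0 a \<longleftrightarrow> (\<exists>C. eventually (\<lambda>eps. norm (a eps) \<le> C) (at_right 0))"
definition domb :: "'v set \<Rightarrow> ('v \<Rightarrow> real) \<Rightarrow> ('v \<Rightarrow> 'k::real_normed_field) \<Rightarrow> bool" where
  "domb S M F \<longleftrightarrow> (\<exists>C. \<forall>x\<in>S. norm (F x) \<le> C * M x)"
definition mapb :: "'v set \<Rightarrow> ('v \<Rightarrow> real) \<Rightarrow> 'w set \<Rightarrow> ('w \<Rightarrow> real) \<Rightarrow> ('v \<Rightarrow> 'w) \<Rightarrow> bool" where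
  "mapb S M S' M' T \<longleftrightarrow> (\<forall>x\<in>S. T x \<in> S') \<and> (\<exists>C. \<forall>x\<in>S. M' (T x) \<le> C * M x)"

lemma abs_bound: "(\<forall>x\<in>S. 0 \<le> (M x::real)) \<Longrightarrow> \<forall>x\<in>S. a x \<le> C * M x \<Longrightarrow> \<forall>x\<in>S. a x \<le> \<bar>C\<bar> * M x"
proof (intro ballI)
  fix x assume "\<forall>x\<in>S. 0 \<le> M x" "\<forall>x\<in>S. a x \<le> C * M x" "x \<in> S"
  then have m: "0 \<le> M x" and "a x \<le> C * M x" by auto
  moreover have "C * M x \<le> \<bar>C\<bar> * M x" by (rule mult_right_mono[OF abs_ge_self m])
  ultimately show "a x \<le> \<bar>C\<bar> * M x" by linarith
qed

lemma ratio_le1: "(a::real) \<ge> 0 \<Longrightarrow> a/(a+1) \<le> 1" "(a::real) \<ge> 0 \<Longrightarrow> a/(1+a) \<le> 1" by simp_all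

lemma posq: "e > 0 \<Longrightarrow> (a::real) \<ge> 0 \<Longrightarrow> e/(a+1) > 0" by simp

lemma small_D: "small S M F \<Longrightarrow> e > 0 \<Longrightarrow> eventually (\<lambda>eps. \<forall>x\<in>S. norm (F eps x) \<le> e * M x) (at_right 0)"
  unfolding small_def by auto

lemma small0_D: "small0 a \<Longrightarrow> e > 0 \<Longrightarrow> eventually (\<lambda>eps. norm (a eps) \<le> e) (at_right 0)"
  unfolding small0_def by auto

lemma small_add:
  assumes "small S M F" "small S M G"
  shows "small S M (\<lambda>eps x. F eps x + G eps x)"
  unfolding small_def
proof (intro allI impI)
  fix e :: real assume e: "e > 0"
  have "eventually (\<lambda>eps. \<forall>x\<in>S. norm (F eps x) \<le> e/2 * M x) (at_right 0)"
       "eventually (\<lambda>eps. \<forall>x\<in>S. norm (G eps x) \<le> e/2 * M x) (at_right 0)"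
    using small_D[OF assms(1), of "e/2"] small_D[OF assms(2), of "e/2"] e by auto
  then show "eventually (\<lambda>eps. \<forall>x\<in>S. norm (F eps x + G eps x) \<le> e * M x) (at_right 0)"
  proof eventually_elim
    case (elim eps)
    show ?case
    proof
      fix x assume "x \<in> S"
      then have "norm (F eps x + G eps x) \<le> e/2 * M x + e/2 * M x"
        using elim by (meson add_mono norm_triangle_ineq order_trans)
      then show "norm (F eps x + G eps x) \<le> e * M x" by (simp add: field_simps)
    qed
  qed
qed

lemma small_uminus: "small S M F \<Longrightarrow> small S M (\<lambda>eps x. - F eps x)"
  unfolding small_def by simp

lemma small_diff: "small S M F \<Longrightarrow> small S M G \<Longrightarrow> small S M (\<lambda>eps x. F eps x - G eps x)"
  using small_add[of S M F "\<lambda>eps x. - G eps x"] small_uminus[of S M G] by simp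

lemma small_zero: "\<forall>x\<in>S. 0 \<le> M x \<Longrightarrow> small S M (\<lambda>eps x. 0)"
  unfolding small_def by simp

lemma small_sum:
  assumes nn: "\<forall>x\<in>S. 0 \<le> M x" and fin: "finite I" and sm: "\<forall>i\<in>I. small S M (F i)"
  shows "small S M (\<lambda>eps x. \<Sum>i\<in>I. F i eps x)"
  using fin sm
proof (induction I rule: finite_induct)
  case empty then show ?case using small_zero[OF nn] by simp
next
  case (insert i I)
  then show ?case using small_add[of S M "F i" "\<lambda>eps x. \<Sum>i\<in>I. F i eps x"] by simp
qed

lemma small_cmult:
  assumes nn: "\<forall>x\<in>S. 0 \<le> M x" and sm: "small S M F"
  shows "small S M (\<lambda>eps x. c * F eps x)"
  unfolding small_def
proof (intro allI impI)
  fix e :: real assume e: "e > 0"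
  have "eventually (\<lambda>eps. \<forall>x\<in>S. norm (F eps x) \<le> e/(norm c + 1) * M x) (at_right 0)"
    by (rule small_D[OF sm]) (rule posq[OF e], use in simp)
  then show "eventually (\<lambda>eps. \<forall>x\<in>S. norm (c * F eps x) \<le> e * M x) (at_right 0)"
  proof eventually_elim
    case (elim eps)
    show ?case
    proof
      fix x assume x: "x \<in> S"
      have "norm (c * F eps x) = norm c * norm (F eps x)" by (simp add: norm_mult)
      also have "\<dots> \<le> norm c * (e/(norm c + 1) * M x)"
        by (intro mult_left_mono) (use elim x in auto)
      also have "\<dots> = (norm c /(norm c + 1)) * (e * M x)" by (simp add: field_simps)
      also have "\<dots> \<le> 1 * (e * M x)"
        using nn x e by (intro mult_right_mono) (auto simp: ratio_le1)
      finally show "norm (c * F eps x) \<le> e * M x" by simp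
    qed
  qed
qed

lemma small_mult0:
  assumes nn: "\<forall>x\<in>S. 0 \<le> M x" and a: "small0 a" and F: "ebnd S M F"
  shows "small S M (\<lambda>eps x. a eps * F eps x)"
  unfolding small_def
proof (intro allI impI)
  fix e :: real assume e: "e > 0"
  obtain C where C: "eventually (\<lambda>eps. \<forall>x\<in>S. norm (F eps x) \<le> C * M x) (at_right 0)"
    using F unfolding ebnd_def by auto
  have C': "eventually (\<lambda>eps. \<forall>x\<in>S. norm (F eps x) \<le> \<bar>C\<bar> * M x) (at_right 0)"
    using C by eventually_elim (rule abs_bound[OF nn])
  have "eventually (\<lambda>eps. norm (a eps) \<le> e/(\<bar>C\<bar> + 1)) (at_right 0)"
    by (rule small0_D[OF a]) (rule posq[OF e], use in simp)
  with C' show "eventually (\<lambda>eps. \<forall>x\<in>S. norm (a eps * F eps x) \<le> e * M x) (at_right 0)"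
  proof eventually_elim
    case (elim eps)
    show ?case
    proof
      fix x assume x: "x \<in> S"
      have "norm (a eps * F eps x) = norm (a eps) * norm (F eps x)" by (simp add: norm_mult)
      also have "\<dots> \<le> (e/(\<bar>C\<bar> + 1)) * (\<bar>C\<bar> * M x)"
        using elim x e by (intro mult_mono) auto
      also have "\<dots> = (\<bar>C\<bar> /(\<bar>C\<bar> + 1)) * (e * M x)" by (simp add: field_simps)
      also have "\<dots> \<le> 1 * (e * M x)"
        using nn x e by (intro mult_right_mono) (auto simp: ratio_le1)
      finally show "norm (a eps * F eps x) \<le> e * M x" by simp
    qed
  qed
qed

lemma small_mult_bnd0:
  assumes nn: "\<forall>x\<in>S. 0 \<le> M x" and a: "bnd0 a" and F: "small S M F"
  shows "small S M (\<lambda>eps x. a eps * F eps x)"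
  unfolding small_def
proof (intro allI impI)
  fix e :: real assume e: "e > 0"
  obtain C where C: "eventually (\<lambda>eps. norm (a eps) \<le> C) (at_right 0)"
    using a unfolding bnd0_def by auto
  have "eventually (\<lambda>eps. \<forall>x\<in>S. norm (F eps x) \<le> e/(\<bar>C\<bar> + 1) * M x) (at_right 0)"
    by (rule small_D[OF F]) (rule posq[OF e], use in simp)
  with C show "eventually (\<lambda>eps. \<forall>x\<in>S. norm (a eps * F eps x) \<le> e * M x) (at_right 0)"
  proof eventually_elim
    case (elim eps)
    show ?case
    proof
      fix x assume x: "x \<in> S"
      have "norm (a eps * F eps x) = norm (a eps) * norm (F eps x)" by (simp add: norm_mult)
      also have "\<dots> \<le> \<bar>C\<bar> * (e/(\<bar>C\<bar> + 1) * M x)"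
        using elim x by (intro mult_mono) auto
      also have "\<dots> = (\<bar>C\<bar> /(\<bar>C\<bar> + 1)) * (e * M x)" by (simp add: field_simps)
      also have "\<dots> \<le> 1 * (e * M x)"
        using nn x e by (intro mult_right_mono) (auto simp: ratio_le1)
      finally show "norm (a eps * F eps x) \<le> e * M x" by simp
    qed
  qed
qed

lemma small_comp:
  assumes nn: "\<forall>x\<in>S. 0 \<le> M x" and F: "small S' M' F" and T: "mapb S M S' M' T"
  shows "small S M (\<lambda>eps x. F eps (T x))"
  unfolding small_def
proof (intro allI impI)
  fix e :: real assume e: "e > 0"
  obtain C where C: "\<forall>x\<in>S. M' (T x) \<le> C * M x" and TS: "\<forall>x\<in>S. T x \<in> S'"
    using T unfolding mapb_def by auto
  have C': "\<forall>x\<in>S. M' (T x) \<le> \<bar>C\<bar> * M x" using abs_bound[OF nn C] .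
  have "eventually (\<lambda>eps. \<forall>x\<in>S'. norm (F eps x) \<le> e/(\<bar>C\<bar> + 1) * M' x) (at_right 0)"
    by (rule small_D[OF F]) (rule posq[OF e], use in simp)
  then show "eventually (\<lambda>eps. \<forall>x\<in>S. norm (F eps (T x)) \<le> e * M x) (at_right 0)"
  proof eventually_elim
    case (elim eps)
    show ?case
    proof
      fix x assume x: "x \<in> S"
      have "norm (F eps (T x)) \<le> e/(\<bar>C\<bar> + 1) * M' (T x)" using elim TS x by auto
      also have "\<dots> \<le> e/(\<bar>C\<bar> + 1) * (\<bar>C\<bar> * M x)"
        using C' x e by (intro mult_left_mono) auto
      also have "\<dots> = (\<bar>C\<bar> /(\<bar>C\<bar> + 1)) * (e * M x)" by (simp add: field_simps)
      also have "\<dots> \<le> 1 * (e * M x)"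
        using nn x e by (intro mult_right_mono) (auto simp: ratio_le1)
      finally show "norm (F eps (T x)) \<le> e * M x" by simp
    qed
  qed
qed

lemma ebnd_comp:
  assumes nn: "\<forall>x\<in>S. 0 \<le> M x" and nn': "\<forall>x\<in>S'. 0 \<le> M' x" and F: "ebnd S' M' F" and T: "mapb S M S' M' T"
  shows "ebnd S M (\<lambda>eps x. F eps (T x))"
proof -
  obtain C where C: "\<forall>x\<in>S. M' (T x) \<le> C * M x" and TS: "\<forall>x\<in>S. T x \<in> S'"
    using T unfolding mapb_def by auto
  have C': "\<forall>x\<in>S. M' (T x) \<le> \<bar>C\<bar> * M x" using abs_bound[OF nn C] .
  obtain D where D: "eventually (\<lambda>eps. \<forall>x\<in>S'. norm (F eps x) \<le> D * M' x) (at_right 0)"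
    using F unfolding ebnd_def by auto
  have "eventually (\<lambda>eps. \<forall>x\<in>S. norm (F eps (T x)) \<le> (\<bar>D\<bar> * \<bar>C\<bar>) * M x) (at_right 0)"
    using D
  proof eventually_elim
    case (elim eps)
    show ?case
    proof
      fix x assume x: "x \<in> S"
      have "norm (F eps (T x)) \<le> D * M' (T x)" using elim TS x by auto
      also have "\<dots> \<le> \<bar>D\<bar> * M' (T x)" using nn' TS x by (intro mult_right_mono) auto
      also have "\<dots> \<le> \<bar>D\<bar> * (\<bar>C\<bar> * M x)" using C' x by (intro mult_left_mono) auto
      finally show "norm (F eps (T x)) \<le> (\<bar>D\<bar> * \<bar>C\<bar>) * M x" by (simp only: mult.assoc)
    qed
  qed
  then show ?thesis unfolding ebnd_def by blast
qed

lemma small_ebnd: assumes "small S M F" shows "ebnd S M F"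
  unfolding ebnd_def by (rule exI[of _ 1]) (use small_D[OF assms, of 1] in simp)

lemma ebnd_add:
  assumes nn: "\<forall>x\<in>S. 0 \<le> M x" and "ebnd S M F" "ebnd S M G"
  shows "ebnd S M (\<lambda>eps x. F eps x + G eps x)"
proof -
  obtain C D where C: "eventually (\<lambda>eps. \<forall>x\<in>S. norm (F eps x) \<le> C * M x) (at_right 0)"
    and D: "eventually (\<lambda>eps. \<forall>x\<in>S. norm (G eps x) \<le> D * M x) (at_right 0)"
    using assms unfolding ebnd_def by auto
  from C D have "eventually (\<lambda>eps. \<forall>x\<in>S. norm (F eps x + G eps x) \<le> (C + D) * M x) (at_right 0)"
  proof eventually_elim
    case (elim eps)
    show ?case
    proof
      fix x assume x: "x \<in> S"
      have "norm (F eps x + G eps x) \<le> norm (F eps x) + norm (G eps x)" by (rule norm_triangle_ineq)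
      also have "\<dots> \<le> C * M x + D * M x" using elim x by (intro add_mono) auto
      finally show "norm (F eps x + G eps x) \<le> (C + D) * M x" by (simp add: distrib_right)
    qed
  qed
  then show ?thesis unfolding ebnd_def by blast
qed

lemma domb_ebnd: "domb S M F \<Longrightarrow> ebnd S M (\<lambda>eps. F)"
  unfolding domb_def ebnd_def by auto

lemma small_point:
  assumes F: "small S M F" and y: "y \<in> S" and nn: "0 \<le> M y"
  shows "small0 (\<lambda>eps. F eps y)"
  unfolding small0_def
proof (intro allI impI)
  fix e :: real assume e: "e > 0"
  have "eventually (\<lambda>eps. \<forall>x\<in>S. norm (F eps x) \<le> e/(M y + 1) * M x) (at_right 0)"
    by (rule small_D[OF F]) (rule posq[OF e], use nn in simp)
  then show "eventually (\<lambda>eps. norm (F eps y) \<le> e) (at_right 0)"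
  proof eventually_elim
    case (elim eps)
    then have "norm (F eps y) \<le> e/(M y + 1) * M y" using y by auto
    also have "\<dots> = (M y / (M y + 1)) * e" by (simp add: field_simps)
    also have "\<dots> \<le> 1 * e" using nn e by (intro mult_right_mono) (auto simp: ratio_le1)
    finally show ?case by simp
  qed
qed

lemma small0_add: "small0 a \<Longrightarrow> small0 b \<Longrightarrow> small0 (\<lambda>eps. a eps + b eps)"
  using small_add[of "{()}" "\<lambda>_. 1" "\<lambda>eps x. a eps" "\<lambda>eps x. b eps"]
  unfolding small_def small0_def by simp

lemma small0_uminus: "small0 a \<Longrightarrow> small0 (\<lambda>eps. - a eps)"
  unfolding small0_def by simp

lemma small0_sum: "finite I \<Longrightarrow> \<forall>i\<in>I. small0 (a i) \<Longrightarrow> small0 (\<lambda>eps. \<Sum>i\<in>I. a i eps)"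
  using small_sum[of "{()}" "\<lambda>_. 1" I "\<lambda>i eps x. a i eps"]
  unfolding small_def small0_def by simp

lemma small0_mult_bnd0: "bnd0 a \<Longrightarrow> small0 b \<Longrightarrow> small0 (\<lambda>eps. a eps * b eps)"
  using small_mult_bnd0[of "{()}" "\<lambda>_. 1" a "\<lambda>eps x. b eps"]
  unfolding small_def small0_def by simp

lemma small0_cmult: "small0 b \<Longrightarrow> small0 (\<lambda>eps. c * b eps)"
  using small_cmult[of "{()}" "\<lambda>_. 1" "\<lambda>eps x. b eps" c]
  unfolding small_def small0_def by simp

lemma small_of_small0:
  assumes "small0 a" "\<forall>x\<in>S. 0 \<le> M x" "\<forall>eps x. x \<in> S \<longrightarrow> norm (F eps x) \<le> norm (a eps) * M x"
  shows "small S M F"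
  unfolding small_def
proof (intro allI impI)
  fix e :: real assume "e > 0"
  then have "eventually (\<lambda>eps. norm (a eps) \<le> e) (at_right 0)" using small0_D[OF assms(1)] by auto
  then show "eventually (\<lambda>eps. \<forall>x\<in>S. norm (F eps x) \<le> e * M x) (at_right 0)"
    by eventually_elim (meson assms(2,3) mult_right_mono order_trans)
qed

lemma small0_pow:
  assumes "j \<ge> 1" shows "small0 (\<lambda>eps. (of_real eps :: 'k::real_normed_field) ^ j)"
  unfolding small0_def
proof (intro allI impI)
  fix e :: real assume e: "e > 0"
  have "eventually (\<lambda>eps::real. 0 < eps \<and> eps < min e 1) (at_right 0)"
    unfolding eventually_at_right[OF zero_less_one] using e
    by (intro exI[of _ "min e 1"]) auto
  then show "eventually (\<lambda>eps. norm ((of_real eps :: 'k) ^ j) \<le> e) (at_right 0)"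
  proof eventually_elim
    case (elim eps)
    have "norm ((of_real eps :: 'k) ^ j) = eps ^ j" using elim by (simp add: norm_power)
    also have "\<dots> \<le> eps ^ 1" using elim assms by (intro power_decreasing) auto
    finally show ?case using elim by simp
  qed
qed

lemma bnd0_pow: "bnd0 (\<lambda>eps. (of_real eps :: 'k::real_normed_field) ^ j)"
  unfolding bnd0_def
proof (intro exI[of _ 1])
  show "eventually (\<lambda>eps. norm ((of_real eps :: 'k) ^ j) \<le> 1) (at_right 0)"
    using ev01 by eventually_elim (simp add: norm_power power_le_one)
qed

lemma small0_bnd0: assumes "small0 a" shows "bnd0 a"
  unfolding bnd0_def by (rule exI[of _ 1]) (use small0_D[OF assms, of 1] in simp)

lemma domb_add: "domb S M F \<Longrightarrow> domb S M G \<Longrightarrow> domb S M (\<lambda>x. F x + G x)"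
proof -
  assume "domb S M F" "domb S M G"
  then obtain C D where C: "\<forall>x\<in>S. norm (F x) \<le> C * M x" and D: "\<forall>x\<in>S. norm (G x) \<le> D * M x"
    unfolding domb_def by auto
  have "\<forall>x\<in>S. norm (F x + G x) \<le> (C + D) * M x"
  proof
    fix x assume x: "x \<in> S"
    have "norm (F x + G x) \<le> norm (F x) + norm (G x)" by (rule norm_triangle_ineq)
    also have "\<dots> \<le> C * M x + D * M x" using C D x by (intro add_mono) auto
    finally show "norm (F x + G x) \<le> (C + D) * M x" by (simp add: distrib_right)
  qed
  then show ?thesis unfolding domb_def by blast
qed

lemma domb_uminus: "domb S M F \<Longrightarrow> domb S M (\<lambda>x. - F x)"
  unfolding domb_def by simp

lemma domb_diff: "domb S M F \<Longrightarrow> domb S M G \<Longrightarrow> domb S M (\<lambda>x. F x - G x)"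
  using domb_add[of S M F "\<lambda>x. - G x"] domb_uminus[of S M G] by simp

lemma domb_sum: assumes "finite I" "\<forall>i\<in>I. domb S M (F i)" shows "domb S M (\<lambda>x. \<Sum>i\<in>I. F i x)"
  using assms
proof (induction I rule: finite_induct)
  case empty then show ?case unfolding domb_def by (intro exI[of _ 0]) auto
next
  case (insert i I)
  then show ?case using domb_add[of S M "F i" "\<lambda>x. \<Sum>i\<in>I. F i x"] by simp
qed

lemma domb_cmult: "domb S M F \<Longrightarrow> domb S M (\<lambda>x. c * F x)"
  unfolding domb_def
proof (elim exE)
  fix C assume C: "\<forall>x\<in>S. norm (F x) \<le> C * M x"
  show "\<exists>C. \<forall>x\<in>S. norm (c * F x) \<le> C * M x"
    by (rule exI[of _ "norm c * C"]) (use C in \<open>auto simp: norm_mult mult.assoc intro: mult_left_mono\<close>)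
qed

lemma domb_comp:
  assumes nn: "\<forall>x\<in>S. 0 \<le> M x" and nn': "\<forall>x\<in>S'. 0 \<le> M' x" and F: "domb S' M' F" and T: "mapb S M S' M' T"
  shows "domb S M (\<lambda>x. F (T x))"
proof -
  have "ebnd S M (\<lambda>eps x. F (T x))"
    using ebnd_comp[OF nn nn' domb_ebnd[OF F] T] .
  then obtain C where "eventually (\<lambda>eps::real. \<forall>x\<in>S. norm (F (T x)) \<le> C * M x) (at_right 0)"
    unfolding ebnd_def by auto
  then have "\<forall>x\<in>S. norm (F (T x)) \<le> C * M x" by (simp add: eventually_const_iff)
  then show ?thesis unfolding domb_def by blast
qed

lemma mapb_comp:
  assumes nn: "\<forall>x\<in>S. 0 \<le> M x" and nn': "\<forall>x\<in>S'. 0 \<le> M' x"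
    and T: "mapb S M S' M' T" and U: "mapb S' M' S'' M'' U"
  shows "mapb S M S'' M'' (\<lambda>x. U (T x))"
proof -
  obtain C where C: "\<forall>x\<in>S. M' (T x) \<le> C * M x" and TS: "\<forall>x\<in>S. T x \<in> S'"
    using T unfolding mapb_def by auto
  have C': "\<forall>x\<in>S. M' (T x) \<le> \<bar>C\<bar> * M x" using abs_bound[OF nn C] .
  obtain D where D: "\<forall>x\<in>S'. M'' (U x) \<le> D * M' x" and US: "\<forall>x\<in>S'. U x \<in> S''"
    using U unfolding mapb_def by auto
  have D': "\<forall>x\<in>S'. M'' (U x) \<le> \<bar>D\<bar> * M' x" using abs_bound[OF nn' D] .
  have "\<forall>x\<in>S. M'' (U (T x)) \<le> (\<bar>D\<bar> * \<bar>C\<bar>) * M x"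
  proof
    fix x assume x: "x \<in> S"
    have "M'' (U (T x)) \<le> \<bar>D\<bar> * M' (T x)" using D' TS x by auto
    also have "\<dots> \<le> \<bar>D\<bar> * (\<bar>C\<bar> * M x)" using C' x by (intro mult_left_mono) auto
    finally show "M'' (U (T x)) \<le> (\<bar>D\<bar> * \<bar>C\<bar>) * M x" by simp
  qed
  then show ?thesis unfolding mapb_def using TS US by blast
qed




lemma tri1: "(\<Sum>j=1..(m::nat). \<Sum>i=0..m-j. G j i) = (\<Sum>k=1..m. \<Sum>j=1..k. G j (k-j) :: 'a::comm_monoid_add)"
proof (induction m)
  case 0 then show ?case by simp
next
  case (Suc m)
  have "(\<Sum>j=1..Suc m. \<Sum>i=0..Suc m-j. G j i) = (\<Sum>j=1..m. \<Sum>i=0..Suc m-j. G j i) + G (Suc m) 0"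
    by simp
  also have "(\<Sum>j=1..m. \<Sum>i=0..Suc m-j. G j i) = (\<Sum>j=1..m. (\<Sum>i=0..m-j. G j i) + G j (Suc m - j))"
  proof (rule sum.cong[OF refl])
    fix j assume "j \<in> {1..m}"
    then have "Suc m - j = Suc (m - j)" by auto
    then show "(\<Sum>i=0..Suc m-j. G j i) = (\<Sum>i=0..m-j. G j i) + G j (Suc m - j)" by simp
  qed
  also have "\<dots> = (\<Sum>j=1..m. \<Sum>i=0..m-j. G j i) + (\<Sum>j=1..m. G j (Suc m - j))"
    by (simp add: sum.distrib)
  finally show ?case using Suc by (simp add: add.assoc)
qed

lemma tri0: "(\<Sum>j=0..(m::nat). \<Sum>i=0..m-j. G j i) = (\<Sum>k=0..m. \<Sum>j=0..k. G j (k-j) :: 'a::comm_monoid_add)"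
proof (induction m)
  case 0 then show ?case by simp
next
  case (Suc m)
  have "(\<Sum>j=0..Suc m. \<Sum>i=0..Suc m-j. G j i) = (\<Sum>j=0..m. \<Sum>i=0..Suc m-j. G j i) + G (Suc m) 0"
    by simp
  also have "(\<Sum>j=0..m. \<Sum>i=0..Suc m-j. G j i) = (\<Sum>j=0..m. (\<Sum>i=0..m-j. G j i) + G j (Suc m - j))"
  proof (rule sum.cong[OF refl])
    fix j assume "j \<in> {0..m}"
    then have "Suc m - j = Suc (m - j)" by auto
    then show "(\<Sum>i=0..Suc m-j. G j i) = (\<Sum>i=0..m-j. G j i) + G j (Suc m - j)" by simp
  qed
  also have "\<dots> = (\<Sum>j=0..m. \<Sum>i=0..m-j. G j i) + (\<Sum>j=0..m. G j (Suc m - j))"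
    by (simp add: sum.distrib)
  finally show ?case using Suc by (simp add: add.assoc)
qed

lemma len_le_sum: "\<forall>j\<in>set js. 1 \<le> j \<Longrightarrow> length js \<le> sum_list (js::nat list)"
  by (induction js) auto

lemma finite_compositions: "finite (compositions i l)"
proof (rule finite_subset)
  show "compositions i l \<subseteq> {xs. set xs \<subseteq> {0..i} \<and> length xs = l}"
    unfolding compositions_def using member_le_sum_list by fastforce
  show "finite {xs. set xs \<subseteq> {0..i::nat} \<and> length xs = l}"
    by (rule finite_lists_length_eq) simp
qed

lemma compositions_0: "compositions i 0 = (if i = 0 then {[]} else {})"
  unfolding compositions_def by auto

lemma compositions_big: "l > i \<Longrightarrow> compositions i l = {}"
  unfolding compositions_def using len_le_sum by fastforce

lemma compositions_Suc:
  "compositions i (Suc l) = (\<lambda>(j,js). j # js) ` (SIGMA j:{1..i}. compositions (i-j) l)"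
proof
  show "compositions i (Suc l) \<subseteq> (\<lambda>(j,js). j # js) ` (SIGMA j:{1..i}. compositions (i-j) l)"
  proof
    fix xs assume xs: "xs \<in> compositions i (Suc l)"
    then obtain j js where xsj: "xs = j # js" unfolding compositions_def by (cases xs) auto
    have "j \<in> {1..i}" "js \<in> compositions (i-j) l" using xs unfolding xsj compositions_def by auto
    then show "xs \<in> (\<lambda>(j,js). j # js) ` (SIGMA j:{1..i}. compositions (i-j) l)"
      unfolding xsj by force
  qed
  show "(\<lambda>(j,js). j # js) ` (SIGMA j:{1..i}. compositions (i-j) l) \<subseteq> compositions i (Suc l)"
    unfolding compositions_def by auto
qed

definition Sc :: "(nat \<Rightarrow> 'a::comm_ring_1) \<Rightarrow> nat \<Rightarrow> nat \<Rightarrow> 'a" where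
  "Sc a i l = (\<Sum>js\<in>compositions i l. prod_list (map a js))"

lemma Sc_0: "Sc a i 0 = (if i = 0 then 1 else 0)"
  unfolding Sc_def compositions_0 by simp

lemma Sc_big: "l > i \<Longrightarrow> Sc a i l = 0"
  unfolding Sc_def compositions_big by simp

lemma Sc_Suc: "Sc a i (Suc l) = (\<Sum>j=1..i. a j * Sc a (i-j) l)"
proof -
  have inj: "inj_on (\<lambda>(j,js). j # js) (SIGMA j:{1..i}. compositions (i-j) l)"
    by (auto simp: inj_on_def)
  have "Sc a i (Suc l) = (\<Sum>p\<in>(SIGMA j:{1..i}. compositions (i-j) l). prod_list (map a ((\<lambda>(j,js). j # js) p)))"
    unfolding Sc_def compositions_Suc by (rule sum.reindex[OF inj, unfolded comp_def])
  also have "\<dots> = (\<Sum>(j,js)\<in>(SIGMA j:{1..i}. compositions (i-j) l). a j * prod_list (map a js))"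
    by (rule sum.cong) auto
  also have "\<dots> = (\<Sum>j=1..i. \<Sum>js\<in>compositions (i-j) l. a j * prod_list (map a js))"
    by (rule sum.Sigma[symmetric]) (auto simp: finite_compositions)
  also have "\<dots> = (\<Sum>j=1..i. a j * Sc a (i-j) l)"
    unfolding Sc_def by (simp add: sum_distrib_left)
  finally show ?thesis .
qed

definition cc :: "(nat \<Rightarrow> 'a::comm_ring_1) \<Rightarrow> nat \<Rightarrow> 'a" where
  "cc a i = (\<Sum>l=0..i. (-1)^l * Sc a i l)"

lemma cc_0: "cc a 0 = 1"
  unfolding cc_def by (simp add: Sc_0)

lemma cc_ext: "i \<le> q \<Longrightarrow> (\<Sum>l=0..q. (-1)^l * Sc a i l) = cc a i"
  unfolding cc_def
  by (rule sum.mono_neutral_right) (auto simp: Sc_big)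

lemma cc_rec:
  assumes "i \<ge> 1"
  shows "cc a i = - (\<Sum>j=1..i. a j * cc a (i-j))"
proof -
  obtain p where p: "i = Suc p" using assms by (cases i) auto
  have "cc a i = (\<Sum>l=0..Suc p. (-1)^l * Sc a i l)" unfolding cc_def p ..
  also have "\<dots> = (\<Sum>l=0..p. (-1)^(Suc l) * Sc a i (Suc l))"
    unfolding sum.atLeast0_atMost_Suc_shift by (simp add: Sc_0 p)
  also have "\<dots> = (\<Sum>l=0..p. \<Sum>j=1..i. - (a j * ((-1)^l * Sc a (i-j) l)))"
    by (simp add: Sc_Suc sum_distrib_left algebra_simps)
  also have "\<dots> = (\<Sum>j=1..i. - (a j * (\<Sum>l=0..p. (-1)^l * Sc a (i-j) l)))"
    by (subst sum.swap) (simp add: sum_distrib_left sum_negf)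
  also have "\<dots> = (\<Sum>j=1..i. - (a j * cc a (i-j)))"
    by (rule sum.cong[OF refl]) (subst cc_ext, auto simp: p)
  finally show ?thesis by (simp add: sum_negf)
qed

lemma Cmp_eq:
  assumes "i \<ge> 1"
  shows "(\<Sum>l=1..i. \<Sum>js\<in>compositions i l. (-1) ^ l * prod_list (map a js)) = cc a i"
proof -
  have "cc a i = (\<Sum>l=0..i. (-1)^l * Sc a i l)" unfolding cc_def ..
  also have "\<dots> = (\<Sum>l=1..i. (-1)^l * Sc a i l)"
    using assms by (subst sum.atLeast_Suc_atMost[of 0 i]) (auto simp: Sc_0)
  finally show ?thesis unfolding Sc_def by (simp add: sum_distrib_left)
qed




lemma lin_on_comp:
  "lin_on sc1 sc2 S T \<Longrightarrow> T ` S \<subseteq> S' \<Longrightarrow> lin_on sc2 sc3 S' f \<Longrightarrow> lin_on sc1 sc3 S (\<lambda>x. f (T x))"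
  unfolding lin_on_def by (auto simp: image_subset_iff)

lemma lin_on_diff: "lin_on sc (*) S f \<Longrightarrow> lin_on sc (*) S g \<Longrightarrow> lin_on sc (*) S (\<lambda>x. f x - (g x :: 'k::field))"
  unfolding lin_on_def by (auto simp: algebra_simps)

lemma lin_on_cmult: "lin_on sc (*) S f \<Longrightarrow> lin_on sc (*) S (\<lambda>x. a * (f x :: 'k::field))"
  unfolding lin_on_def by (auto simp: algebra_simps)

lemma lin_on_sum: "finite I \<Longrightarrow> \<forall>i\<in>I. lin_on sc (*) S (f i) \<Longrightarrow> lin_on sc (*) S (\<lambda>x. \<Sum>i\<in>I. (f i x :: 'k::field))"
  unfolding lin_on_def by (auto simp: sum.distrib sum_distrib_left)

lemma lin_on_subset: "lin_on sc1 sc2 S f \<Longrightarrow> S' \<subseteq> S \<Longrightarrow> lin_on sc1 sc2 S' f"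
  unfolding lin_on_def by blast

lemma lin_on_cong: "lin_on sc1 sc2 S f \<Longrightarrow> \<forall>x\<in>S. g x = f x \<Longrightarrow> \<forall>x\<in>S. \<forall>y\<in>S. x + y \<in> S \<Longrightarrow> \<forall>c. \<forall>x\<in>S. sc1 c x \<in> S \<Longrightarrow> lin_on sc1 sc2 S g"
  unfolding lin_on_def by simp

lemma domb_cong: "domb S M F \<Longrightarrow> \<forall>x\<in>S. G x = F x \<Longrightarrow> domb S M G"
  unfolding domb_def by simp

lemma small_cong_ev: "small S M F \<Longrightarrow> eventually (\<lambda>eps. \<forall>x\<in>S. G eps x = F eps x) (at_right 0) \<Longrightarrow> small S M G"
  unfolding small_def
proof (intro allI impI)
  fix e :: real assume "\<forall>e>0. \<forall>\<^sub>F eps in at_right 0. \<forall>x\<in>S. norm (F eps x) \<le> e * M x" "e > 0"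
    "eventually (\<lambda>eps. \<forall>x\<in>S. G eps x = F eps x) (at_right 0)"
  then show "\<forall>\<^sub>F eps in at_right 0. \<forall>x\<in>S. norm (G eps x) \<le> e * M x"
    by (auto elim: eventually_elim2)
qed

lemma small0_cong_ev: "small0 a \<Longrightarrow> eventually (\<lambda>eps. b eps = a eps) (at_right 0) \<Longrightarrow> small0 b"
  unfolding small0_def
proof (intro allI impI)
  fix e :: real assume "\<forall>e>0. \<forall>\<^sub>F eps in at_right 0. norm (a eps) \<le> e" "e > 0"
    "eventually (\<lambda>eps. b eps = a eps) (at_right 0)"
  then show "\<forall>\<^sub>F eps in at_right 0. norm (b eps) \<le> e"
    by (auto elim: eventually_elim2)
qed

locale mt =
  fixes sc :: "'k::{real_normed_field,banach} \<Rightarrow> 'v::ab_group_add \<Rightarrow> 'v"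
    and n :: nat
    and B :: "nat \<Rightarrow> 'v set" and N :: "nat \<Rightarrow> 'v \<Rightarrow> real"
    and L :: "nat \<Rightarrow> 'v \<Rightarrow> 'v" and Leps :: "real \<Rightarrow> 'v \<Rightarrow> 'v"
    and lam :: 'k and h :: 'v and nu :: "'v \<Rightarrow> 'k" and D0 :: "'v set"
    and lameps :: "real \<Rightarrow> 'k" and nueps :: "real \<Rightarrow> 'v \<Rightarrow> 'k"
  assumes vs: "vector_space sc"
    and B0: "B 0 = UNIV"
    and Bsub: "\<And>k. k \<le> n + 1 \<Longrightarrow> module.subspace sc (B k)"
    and Bdec: "\<And>k. k \<le> n \<Longrightarrow> B (Suc k) \<subseteq> B k"
    and condI: "\<And>j i. j \<le> n \<Longrightarrow> j \<le> i \<Longrightarrow> i \<le> n \<Longrightarrow>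
                  lin_on sc sc (B i) (L j) \<and> L j ` B i \<subseteq> B (i - j)"
    and Leps_lin: "\<And>eps. 0 < eps \<Longrightarrow> eps < 1 \<Longrightarrow> lin_on sc sc UNIV (Leps eps)"
    and lam_ne: "lam \<noteq> 0" and h_in: "h \<in> B (n + 1)"
    and nu_lin: "lin_on sc (*) UNIV nu"
    and nu_eig: "\<And>f. nu (L 0 f) = lam * nu f"
    and h_eig: "L 0 h = sc lam h" and nu_h: "nu h = 1"
    and D0_sub: "module.subspace sc D0" and B1_D0: "B 1 \<subseteq> D0"
    and R_inv: "\<And>f. f \<in> D0 \<Longrightarrow> \<exists>!g. Rop sc (L 0) lam h nu g - sc lam g = f"
    and Rl_pres: "\<And>i. 1 \<le> i \<Longrightarrow> i \<le> n + 1 \<Longrightarrow> Rlam sc (L 0) lam h nu ` B i \<subseteq> B i"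
    and nueps_lin: "\<And>eps. 0 < eps \<Longrightarrow> eps < 1 \<Longrightarrow> lin_on sc (*) UNIV (nueps eps)"
    and nueps_eig: "\<And>eps f. 0 < eps \<Longrightarrow> eps < 1 \<Longrightarrow>
                      nueps eps (Leps eps f) = lameps eps * nueps eps f"
    and nueps_h: "\<And>eps. 0 < eps \<Longrightarrow> eps < 1 \<Longrightarrow> nueps eps h \<noteq> 0"
    and banach: "\<And>k. k \<le> n + 1 \<Longrightarrow> banach_on sc (B k) (N k)"
    and nu_bdd: "bounded_functional sc (B 0) (N 0) nu"
    and L_bdd: "\<And>j i. j \<le> n \<Longrightarrow> j \<le> i \<Longrightarrow> i \<le> n + 1 \<Longrightarrow>
                  bounded_op sc sc (B i) (N i) (B (i - j)) (N (i - j)) (L j)"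
    and kappa_bdd: "\<exists>C. \<forall>eps. 0 < eps \<and> eps < 1 \<longrightarrow> opnorm_le (B 0) (N 0) norm (kappa_eps nueps h eps) C"
    and Rl_bdd1: "bounded_op sc sc (B 1) (N 1) (B 0) (N 0) (Rlam sc (L 0) lam h nu)"
    and Rl_bdd: "\<And>j. 1 \<le> j \<Longrightarrow> j \<le> n + 1 \<Longrightarrow> bounded_op sc sc (B j) (N j) (B j) (N j) (Rlam sc (L 0) lam h nu)"
    and Lconv: "\<And>j. j \<le> n \<Longrightarrow> opnorm_tendsto_0 (B (j + 1)) (N (j + 1)) (N 0) (tildeL sc L Leps j)"
begin

abbreviation "R \<equiv> Rlam sc (L 0) lam h nu"
abbreviation "K \<equiv> kap sc L h nu R"
abbreviation "ke \<equiv> kappa_eps nueps h"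
abbreviation "tk \<equiv> tildekappa sc L h nu R nueps"
abbreviation "nk \<equiv> normk N"
abbreviation "lm \<equiv> lamk sc L h nu R"

lemma msc: "module sc" using vs by (simp add: module_iff_vector_space)

lemma B_mono: "i \<le> k \<Longrightarrow> k \<le> n + 1 \<Longrightarrow> B k \<subseteq> B i"
proof (induction k)
  case 0 then show ?case by simp
next
  case (Suc k)
  show ?case
  proof (cases "i = Suc k")
    case False
    then have "B (Suc k) \<subseteq> B k" "B k \<subseteq> B i" using Suc Bdec[of k] by auto
    then show ?thesis by blast
  qed simp
qed

lemma in_B: "x \<in> B k \<Longrightarrow> i \<le> k \<Longrightarrow> k \<le> n + 1 \<Longrightarrow> x \<in> B i"
  using B_mono by blast

lemma B_add: "k \<le> n + 1 \<Longrightarrow> x \<in> B k \<Longrightarrow> y \<in> B k \<Longrightarrow> x + y \<in> B k"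
  using module.subspace_add[OF msc Bsub] by blast

lemma B_diff: "k \<le> n + 1 \<Longrightarrow> x \<in> B k \<Longrightarrow> y \<in> B k \<Longrightarrow> x - y \<in> B k"
  using module.subspace_diff[OF msc Bsub] by blast

lemma B_scale: "k \<le> n + 1 \<Longrightarrow> x \<in> B k \<Longrightarrow> sc c x \<in> B k"
  using module.subspace_scale[OF msc Bsub] by blast

lemma N_nonneg: assumes "k \<le> n + 1" "x \<in> B k" shows "0 \<le> N k x"
proof -
  have "\<forall>x\<in>B k. 0 \<le> N k x" using banach[OF assms(1)] unfolding banach_on_def by (rule conjunct2[THEN conjunct1])
  then show ?thesis using assms(2) by blast
qed

lemma N_le_nk: "1 \<le> i \<Longrightarrow> i \<le> k \<Longrightarrow> N i x \<le> nk k x"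
  unfolding normk_def by (auto intro!: Max_ge)

lemma nk_le: "1 \<le> k \<Longrightarrow> (\<And>i. 1 \<le> i \<Longrightarrow> i \<le> k \<Longrightarrow> N i x \<le> c) \<Longrightarrow> nk k x \<le> c"
  unfolding normk_def by (auto simp: Max_le_iff)

lemma nk0: "nk 0 x = N 0 x" unfolding normk_def by simp
lemma nk1: "nk 1 x = N 1 x" unfolding normk_def by simp

lemma nk_nonneg: "k \<le> n + 1 \<Longrightarrow> x \<in> B k \<Longrightarrow> 0 \<le> nk k x"
proof (cases "k = 0")
  case True
  then show "k \<le> n + 1 \<Longrightarrow> x \<in> B k \<Longrightarrow> 0 \<le> nk k x" using N_nonneg[of 0 x] by (simp add: nk0)
next
  case False
  assume "k \<le> n + 1" "x \<in> B k"
  then have "0 \<le> N 1 x" using N_nonneg[of 1 x] in_B[of x k 1] False by auto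
  also have "\<dots> \<le> nk k x" using False by (intro N_le_nk) auto
  finally show ?thesis .
qed

lemma nn: "k \<le> n + 1 \<Longrightarrow> \<forall>x\<in>B k. 0 \<le> nk k x"
  using nk_nonneg by blast

lemma nk_mono: "1 \<le> i \<Longrightarrow> i \<le> k \<Longrightarrow> nk i x \<le> nk k x"
  by (rule nk_le) (auto intro: N_le_nk)

lemma Nbound:
  assumes "\<forall>x\<in>S. A x \<le> C * N i x" "\<forall>x\<in>S. 0 \<le> N i x" "\<forall>x\<in>S. N i x \<le> M x"
  shows "\<forall>x\<in>S. A x \<le> \<bar>C\<bar> * M x"
proof
  fix x assume x: "x \<in> S"
  have "A x \<le> C * N i x" using assms x by auto
  also have "\<dots> \<le> \<bar>C\<bar> * N i x" using assms(2) x by (intro mult_right_mono) auto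
  also have "\<dots> \<le> \<bar>C\<bar> * M x" using assms(3) x by (intro mult_left_mono) auto
  finally show "A x \<le> \<bar>C\<bar> * M x" .
qed

lemma mapb_of_N:
  assumes k: "1 \<le> k" and TS: "\<forall>x\<in>S. T x \<in> S'"
    and b: "\<forall>i\<in>{1..k}. \<exists>C. \<forall>x\<in>S. N i (T x) \<le> C * M x" and nnM: "\<forall>x\<in>S. 0 \<le> M x"
  shows "mapb S M S' (nk k) T"
proof -
  obtain C where C: "\<forall>i\<in>{1..k}. \<forall>x\<in>S. N i (T x) \<le> C i * M x"
    using bchoice[OF b] by blast
  define D where "D = (\<Sum>i\<in>{1..k}. \<bar>C i\<bar>)"
  have "\<forall>x\<in>S. nk k (T x) \<le> D * M x"
  proof
    fix x assume x: "x \<in> S"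
    show "nk k (T x) \<le> D * M x"
    proof (rule nk_le[OF k])
      fix i assume i: "1 \<le> i" "i \<le> k"
      have "N i (T x) \<le> C i * M x" using C x i by auto
      also have "\<dots> \<le> \<bar>C i\<bar> * M x" using nnM x by (intro mult_right_mono) auto
      also have "\<dots> \<le> D * M x" unfolding D_def using nnM x i
        by (intro mult_right_mono member_le_sum) auto
      finally show "N i (T x) \<le> D * M x" .
    qed
  qed
  then show ?thesis unfolding mapb_def using TS by blast
qed

lemma R_in: "1 \<le> i \<Longrightarrow> i \<le> n + 1 \<Longrightarrow> x \<in> B i \<Longrightarrow> R x \<in> B i"
  using Rl_pres by blast

lemma mapb_R:
  assumes "1 \<le> i" "i \<le> p" "p \<le> n + 1"
  shows "mapb (B p) (nk p) (B i) (nk i) R"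
proof (rule mapb_of_N)
  show "1 \<le> i" by fact
  show "\<forall>x\<in>B p. R x \<in> B i" using assms R_in[of p] in_B[of _ p i] by auto
  show "\<forall>x\<in>B p. 0 \<le> nk p x" using nn assms by auto
  show "\<forall>i'\<in>{1..i}. \<exists>C. \<forall>x\<in>B p. N i' (R x) \<le> C * nk p x"
  proof
    fix i' assume i': "i' \<in> {1..i}"
    obtain C where C: "\<forall>x\<in>B i'. N i' (R x) \<le> C * N i' x"
      using Rl_bdd[of i'] i' assms unfolding bounded_op_def by auto
    have "\<forall>x\<in>B p. N i' (R x) \<le> \<bar>C\<bar> * nk p x"
      by (rule Nbound[of _ _ C]) (use C i' assms in_B[of _ p i'] N_nonneg[of i'] N_le_nk[of i' p] in auto)
    then show "\<exists>C. \<forall>x\<in>B p. N i' (R x) \<le> C * nk p x" by blast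
  qed
qed

lemma mapb_R0:
  assumes "1 \<le> p" "p \<le> n + 1"
  shows "mapb (B p) (nk p) (B 0) (nk 0) R"
proof -
  obtain C where C: "\<forall>x\<in>B 1. N 0 (R x) \<le> C * N 1 x"
    using Rl_bdd1 unfolding bounded_op_def by auto
  have "\<forall>x\<in>B p. N 0 (R x) \<le> \<bar>C\<bar> * nk p x"
    by (rule Nbound[of _ _ C]) (use C assms in_B[of _ p 1] N_nonneg[of 1] N_le_nk[of 1 p] in auto)
  then show ?thesis unfolding mapb_def nk0 B0 by blast
qed

lemma mapb_Rk: "1 \<le> p \<Longrightarrow> i \<le> p \<Longrightarrow> p \<le> n + 1 \<Longrightarrow> mapb (B p) (nk p) (B i) (nk i) R"
  using mapb_R[of i p] mapb_R0[of p] by (cases "i = 0") auto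

lemma mapb_id: "1 \<le> i \<Longrightarrow> i \<le> p \<Longrightarrow> p \<le> n + 1 \<Longrightarrow> mapb (B p) (nk p) (B i) (nk i) (\<lambda>x. x)"
  unfolding mapb_def using in_B[of _ p i] nk_mono[of i p] by (intro conjI exI[of _ 1]) auto

lemma mapb_L:
  assumes j: "1 \<le> j" "j \<le> n" "j \<le> p" "p \<le> n + 1"
  shows "mapb (B p) (nk p) (B (p - j)) (nk (p - j)) (L j)"
proof (cases "p - j = 0")
  case True
  then have pj: "p = j" using j by auto
  obtain C where C: "\<forall>x\<in>B j. N 0 (L j x) \<le> C * N j x"
    using L_bdd[of j j] j unfolding bounded_op_def by auto
  have "\<forall>x\<in>B p. N 0 (L j x) \<le> \<bar>C\<bar> * nk p x"
    by (rule Nbound[of _ _ C]) (use C pj j N_nonneg[of j] N_le_nk[of j p] in auto)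
  then show ?thesis unfolding mapb_def True nk0 B0 by blast
next
  case False
  show ?thesis
  proof (rule mapb_of_N)
    show "1 \<le> p - j" using False by auto
    show "\<forall>x\<in>B p. L j x \<in> B (p - j)" using L_bdd[of j p] j unfolding bounded_op_def by auto
    show "\<forall>x\<in>B p. 0 \<le> nk p x" using nn j by auto
    show "\<forall>i\<in>{1..p - j}. \<exists>C. \<forall>x\<in>B p. N i (L j x) \<le> C * nk p x"
    proof
      fix i assume i: "i \<in> {1..p - j}"
      have ij: "i + j \<le> n + 1" "j \<le> i + j" using i j by auto
      obtain C where C: "\<forall>x\<in>B (i + j). N (i + j - j) (L j x) \<le> C * N (i + j) x"
        using L_bdd[OF j(2) ij(2) ij(1)] unfolding bounded_op_def by blast
      have "\<forall>x\<in>B p. N i (L j x) \<le> \<bar>C\<bar> * nk p x"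
        by (rule Nbound[of _ _ C]) (use C i j in_B[of _ p "i + j"] N_nonneg[of "i + j"] N_le_nk[of "i + j" p] in auto)
      then show "\<exists>C. \<forall>x\<in>B p. N i (L j x) \<le> C * nk p x" by blast
    qed
  qed
qed

lemma mapb_LR:
  assumes j: "1 \<le> j" "j \<le> n" "j \<le> p" "p \<le> n + 1"
  shows "mapb (B p) (nk p) (B (p - j)) (nk (p - j)) (\<lambda>x. L j (R x))"
  by (rule mapb_comp[OF _ _ mapb_R[of p p] mapb_L]) (use j nn in auto)

end



declare kap.simps[simp del]

context mt begin

lemma nu_add: "nu (x + y) = nu x + nu y" using nu_lin unfolding lin_on_def by blast
lemma nu_scale: "nu (sc c x) = c * nu x" using nu_lin unfolding lin_on_def by blast
lemma nu_additive: "additive nu" by unfold_locales (rule nu_add)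
lemma nu_diff: "nu (x - y) = nu x - nu y" using additive.diff[OF nu_additive] .

lemma ke_add: "0 < eps \<Longrightarrow> eps < 1 \<Longrightarrow> ke eps (x + y) = ke eps x + ke eps y"
  using nueps_lin[of eps] unfolding lin_on_def kappa_eps_def by (simp add: add_divide_distrib)
lemma ke_scale: "0 < eps \<Longrightarrow> eps < 1 \<Longrightarrow> ke eps (sc c x) = c * ke eps x"
  using nueps_lin[of eps] unfolding lin_on_def kappa_eps_def by simp
lemma ke_additive: "0 < eps \<Longrightarrow> eps < 1 \<Longrightarrow> additive (ke eps)"
  by unfold_locales (rule ke_add)
lemma ke_diff: "0 < eps \<Longrightarrow> eps < 1 \<Longrightarrow> ke eps (x - y) = ke eps x - ke eps y"
  using additive.diff[OF ke_additive] .
lemma ke_sum: "0 < eps \<Longrightarrow> eps < 1 \<Longrightarrow> ke eps (sum f A) = (\<Sum>a\<in>A. ke eps (f a))"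
  using additive.sum[OF ke_additive] .
lemma ke_h: "0 < eps \<Longrightarrow> eps < 1 \<Longrightarrow> ke eps h = 1"
  using nueps_h unfolding kappa_eps_def by simp

lemma ke_bound: "\<exists>C\<ge>0. \<forall>eps. 0 < eps \<and> eps < 1 \<longrightarrow> (\<forall>x. norm (ke eps x) \<le> C * N 0 x)"
proof -
  obtain C where C: "\<forall>eps. 0 < eps \<and> eps < 1 \<longrightarrow> (\<forall>x. norm (ke eps x) \<le> C * N 0 x)"
    using kappa_bdd unfolding opnorm_le_def B0 by auto
  have "\<forall>eps. 0 < eps \<and> eps < 1 \<longrightarrow> (\<forall>x. norm (ke eps x) \<le> \<bar>C\<bar> * N 0 x)"
  proof (intro allI impI)
    fix eps :: real and x assume e: "0 < eps \<and> eps < 1"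
    have "norm (ke eps x) \<le> C * N 0 x" using C e by auto
    also have "\<dots> \<le> \<bar>C\<bar> * N 0 x" using N_nonneg[of 0 x] B0 by (intro mult_right_mono) auto
    finally show "norm (ke eps x) \<le> \<bar>C\<bar> * N 0 x" .
  qed
  then show ?thesis by (intro exI[of _ "\<bar>C\<bar>"]) auto
qed

lemma ke_ebnd0: "ebnd (B 0) (nk 0) ke"
proof -
  obtain C where C: "\<forall>eps. 0 < eps \<and> eps < 1 \<longrightarrow> (\<forall>x. norm (ke eps x) \<le> C * N 0 x)"
    using ke_bound by auto
  have "eventually (\<lambda>eps. \<forall>x\<in>B 0. norm (ke eps x) \<le> C * nk 0 x) (at_right 0)"
    using ev01 by eventually_elim (use C in \<open>auto simp: nk0\<close>)
  then show ?thesis unfolding ebnd_def by blast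
qed

lemma R_eq: assumes "x \<in> B 1" shows "L 0 (R x) - sc lam (sc (nu (R x)) h) - sc lam (R x) = x"
proof -
  have "x \<in> D0" using assms B1_D0 by auto
  from theI'[OF R_inv[OF this]] show ?thesis unfolding Rlam_def Rop_def .
qed

lemma nu_R: assumes "x \<in> B 1" shows "nu x = - lam * nu (R x)"
proof -
  have "nu x = nu (L 0 (R x) - sc lam (sc (nu (R x)) h) - sc lam (R x))" using R_eq[OF assms] by simp
  also have "\<dots> = - lam * nu (R x)" unfolding nu_diff nu_scale nu_eig nu_h by (simp add: algebra_simps)
  finally show ?thesis .
qed

lemma nu_dom0: "domb (B 0) (nk 0) nu"
  using nu_bdd unfolding bounded_functional_def bounded_op_def domb_def nk0 by auto

lemma nu_dom1: "domb (B 1) (nk 1) nu"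
proof -
  have "domb (B 1) (nk 1) (\<lambda>x. nu (R x))"
    by (rule domb_comp[OF _ _ nu_dom0 mapb_R0]) (use nn in auto)
  then have "domb (B 1) (nk 1) (\<lambda>x. - lam * nu (R x))" by (rule domb_cmult)
  then show ?thesis by (rule domb_cong) (use nu_R in auto)
qed

lemma ke_R: assumes "x \<in> B 1" "0 < eps" "eps < 1"
  shows "ke eps x - nu x = ke eps (L 0 (R x)) - lam * ke eps (R x)"
proof -
  have "ke eps x = ke eps (L 0 (R x) - sc lam (sc (nu (R x)) h) - sc lam (R x))" using R_eq[OF assms(1)] by simp
  also have "\<dots> = ke eps (L 0 (R x)) - lam * nu (R x) - lam * ke eps (R x)"
    unfolding ke_diff[OF assms(2,3)] ke_scale[OF assms(2,3)] ke_h[OF assms(2,3)] by simp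
  finally show ?thesis using nu_R[OF assms(1)] by simp
qed

lemma lam_eq: "0 < eps \<Longrightarrow> eps < 1 \<Longrightarrow> lam = ke eps (L 0 h)"
  by (simp add: h_eig ke_scale ke_h)

lemma lameps_eq: "0 < eps \<Longrightarrow> eps < 1 \<Longrightarrow> ke eps (Leps eps y) = lameps eps * ke eps y"
  unfolding kappa_eps_def using nueps_eig by simp

lemma lameps_eq2: "0 < eps \<Longrightarrow> eps < 1 \<Longrightarrow> lameps eps = ke eps (Leps eps h)"
  using lameps_eq[of eps h] ke_h by simp

lemma tildeL_exp:
  assumes e: "0 < eps" "eps < 1"
  shows "ke eps (Leps eps y) - ke eps (L 0 y) =
    (\<Sum>j=1..m. of_real eps ^ j * ke eps (L j y)) + of_real eps ^ m * ke eps (tildeL sc L Leps m eps y)"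
proof -
  have ne: "(of_real eps :: 'k) ^ m \<noteq> 0" using e by simp
  have "ke eps (tildeL sc L Leps m eps y) = inverse (of_real eps ^ m) *
      (ke eps (Leps eps y) - ke eps (L 0 y) - (\<Sum>j=1..m. of_real eps ^ j * ke eps (L j y)))"
    unfolding tildeL_def using e by (simp add: ke_scale ke_diff ke_sum)
  then show ?thesis using ne by (simp add: field_simps)
qed

lemma tk_exp:
  assumes e: "0 < eps"
  shows "ke eps y = (\<Sum>i=0..p. K i y * of_real eps ^ i) + of_real eps ^ p * tk p eps y"
proof -
  have ne: "(of_real eps :: 'k) ^ p \<noteq> 0" using e by simp
  have K0: "K 0 y = nu y" by (subst kap.simps) simp
  have "(\<Sum>i=0..p. K i y * of_real eps ^ i) = nu y + (\<Sum>i=1..p. K i y * of_real eps ^ i)"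
    by (subst sum.atLeast_Suc_atMost[of 0 p]) (auto simp: K0)
  then show ?thesis unfolding tildekappa_def using ne by (simp add: field_simps)
qed

lemma K0: "K 0 y = nu y" by (subst kap.simps) simp

lemma Kpos: "0 < k \<Longrightarrow> K k x = (\<Sum>j=1..k. K (k - j) (sc (lm j) (R x) - L j (R x)))"
  by (subst kap.simps[of sc L h nu R k x]) (simp add: lamk_def)

lemma K_diff_lin: "lin_on sc (*) S f \<Longrightarrow> module.subspace sc S \<Longrightarrow> a \<in> S \<Longrightarrow> b \<in> S \<Longrightarrow> f (a - b) = f a - f b"
proof -
  assume lin: "lin_on sc (*) S f" and sub: "module.subspace sc S" and ab: "a \<in> S" "b \<in> S"
  have "a - b \<in> S" using module.subspace_diff[OF msc sub ab] .
  then have "f ((a - b) + b) = f (a - b) + f b" using lin ab unfolding lin_on_def by blast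
  then show ?thesis by (simp add: algebra_simps)
qed

lemma Kexp:
  assumes k: "1 \<le> k" "k \<le> n" and x: "x \<in> B k"
    and lin: "\<forall>j\<in>{1..k}. lin_on sc (*) (B (k - j)) (K (k - j))"
  shows "K k x = (\<Sum>j=1..k. lm j * K (k - j) (R x) - K (k - j) (L j (R x)))"
proof -
  have "K k x = (\<Sum>j=1..k. K (k - j) (sc (lm j) (R x) - L j (R x)))" using k by (simp add: Kpos)
  also have "\<dots> = (\<Sum>j=1..k. lm j * K (k - j) (R x) - K (k - j) (L j (R x)))"
  proof (rule sum.cong[OF refl])
    fix j assume j: "j \<in> {1..k}"
    have Rx: "R x \<in> B k" using R_in[of k x] k x by auto
    then have Rx': "R x \<in> B (k - j)" using in_B[of "R x" k "k - j"] k by auto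
    have sRx: "sc (lm j) (R x) \<in> B (k - j)" using B_scale[OF _ Rx'] k by auto
    have LRx: "L j (R x) \<in> B (k - j)" using condI[of j k] j k Rx by auto
    have "K (k - j) (sc (lm j) (R x) - L j (R x)) = K (k - j) (sc (lm j) (R x)) - K (k - j) (L j (R x))"
      by (rule K_diff_lin[OF _ Bsub sRx LRx]) (use lin j k in auto)
    also have "K (k - j) (sc (lm j) (R x)) = lm j * K (k - j) (R x)"
      using lin j Rx' unfolding lin_on_def by blast
    finally show "K (k - j) (sc (lm j) (R x) - L j (R x)) = lm j * K (k - j) (R x) - K (k - j) (L j (R x))" .
  qed
  finally show ?thesis .
qed

lemma Klin: "k \<le> n \<Longrightarrow> lin_on sc (*) (B k) (K k)"
proof (induction k rule: less_induct)
  case (less k)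
  show ?case
  proof (cases "k = 0")
    case True
    then show ?thesis using lin_on_subset[OF nu_lin] by (simp add: K0 B0)
  next
    case False
    have lin: "\<forall>j\<in>{1..k}. lin_on sc (*) (B (k - j)) (K (k - j))" using less False by auto
    have "lin_on sc (*) (B k) (\<lambda>x. \<Sum>j=1..k. lm j * K (k - j) (R x) - K (k - j) (L j (R x)))"
    proof (rule lin_on_sum, simp, rule ballI)
      fix j assume j: "j \<in> {1..k}"
      have Rlin: "lin_on sc sc (B k) R" and Rim: "R ` B k \<subseteq> B k"
        using Rl_bdd[of k] False less unfolding bounded_op_def by auto
      have Rim': "R ` B k \<subseteq> B (k - j)" using Rim B_mono[of "k - j" k] less by auto
      have Llin: "lin_on sc sc (B k) (L j)" and Lim: "L j ` B k \<subseteq> B (k - j)"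
        using condI[of j k] j less by auto
      have "lin_on sc sc (B k) (\<lambda>x. L j (R x))" by (rule lin_on_comp[OF Rlin Rim Llin])
      moreover have "(\<lambda>x. L j (R x)) ` B k \<subseteq> B (k - j)" using Rim Lim by auto
      moreover have lj: "lin_on sc (*) (B (k - j)) (K (k - j))" using lin j by blast
      ultimately have a: "lin_on sc (*) (B k) (\<lambda>x. K (k - j) (L j (R x)))"
        by (rule lin_on_comp)
      have b: "lin_on sc (*) (B k) (\<lambda>x. K (k - j) (R x))"
        by (rule lin_on_comp[OF Rlin Rim' lj])
      show "lin_on sc (*) (B k) (\<lambda>x. lm j * K (k - j) (R x) - K (k - j) (L j (R x)))"
        by (rule lin_on_diff[OF lin_on_cmult[OF b] a])
    qed
    then show ?thesis
    proof (rule lin_on_cong)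
      show "\<forall>x\<in>B k. K k x = (\<Sum>j=1..k. lm j * K (k - j) (R x) - K (k - j) (L j (R x)))"
        using Kexp[OF _ less.prems _ lin] False by auto
      show "\<forall>x\<in>B k. \<forall>y\<in>B k. x + y \<in> B k" using B_add less.prems by auto
      show "\<forall>c. \<forall>x\<in>B k. sc c x \<in> B k" using B_scale less.prems by auto
    qed
  qed
qed

lemma Kexp': "1 \<le> k \<Longrightarrow> k \<le> n \<Longrightarrow> x \<in> B k \<Longrightarrow> K k x = (\<Sum>j=1..k. lm j * K (k - j) (R x) - K (k - j) (L j (R x)))"
  by (rule Kexp) (auto intro: Klin)

lemma Kdom: "k \<le> n \<Longrightarrow> domb (B k) (nk k) (K k)"
proof (induction k rule: less_induct)
  case (less k)
  show ?case
  proof (cases "k = 0")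
    case True
    then show ?thesis using nu_dom0 by (simp add: K0)
  next
    case False
    have "domb (B k) (nk k) (\<lambda>x. \<Sum>j=1..k. lm j * K (k - j) (R x) - K (k - j) (L j (R x)))"
    proof (rule domb_sum, simp, rule ballI)
      fix j assume j: "j \<in> {1..k}"
      have IH: "domb (B (k - j)) (nk (k - j)) (K (k - j))" using less j False by auto
      have a: "domb (B k) (nk k) (\<lambda>x. K (k - j) (R x))"
        by (rule domb_comp[OF _ _ IH mapb_Rk]) (use nn less False in auto)
      have b: "domb (B k) (nk k) (\<lambda>x. K (k - j) (L j (R x)))"
        by (rule domb_comp[OF _ _ IH mapb_LR]) (use nn less False j in auto)
      show "domb (B k) (nk k) (\<lambda>x. lm j * K (k - j) (R x) - K (k - j) (L j (R x)))"
        by (rule domb_diff[OF domb_cmult[OF a] b])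
    qed
    then show ?thesis
    proof (rule domb_cong)
      show "\<forall>x\<in>B k. K k x = (\<Sum>j=1..k. lm j * K (k - j) (R x) - K (k - j) (L j (R x)))"
        using Kexp'[OF _ less.prems] False by auto
    qed
  qed
qed

lemma part1: "k \<le> n \<Longrightarrow> bounded_functional sc (B k) (nk k) (K k)"
  unfolding bounded_functional_def bounded_op_def using Klin Kdom unfolding domb_def by auto

end



context mt begin

lemma kappa_L_small:
  assumes m: "m \<le> n"
  shows "small (B (m + 1)) (nk (m + 1)) (\<lambda>eps y. ke eps (tildeL sc L Leps m eps y))"
  unfolding small_def
proof (intro allI impI)
  fix e :: real assume e: "e > 0"
  obtain Ck where Ck: "Ck \<ge> 0" "\<forall>eps. 0 < eps \<and> eps < 1 \<longrightarrow> (\<forall>x. norm (ke eps x) \<le> Ck * N 0 x)"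
    using ke_bound by auto
  have "eventually (\<lambda>eps. \<forall>x\<in>B (m + 1). N 0 (tildeL sc L Leps m eps x) \<le> e/(Ck+1) * N (m + 1) x) (at_right 0)"
    using Lconv[OF m] posq[OF e Ck(1)] unfolding opnorm_tendsto_0_def opnorm_le_def by blast
  with ev01 show "eventually (\<lambda>eps. \<forall>x\<in>B (m + 1). norm (ke eps (tildeL sc L Leps m eps x)) \<le> e * nk (m + 1) x) (at_right 0)"
  proof eventually_elim
    case (elim eps)
    show ?case
    proof
      fix x assume x: "x \<in> B (m + 1)"
      have Nx: "0 \<le> N (m + 1) x" using N_nonneg[of "m+1" x] x m by auto
      have "norm (ke eps (tildeL sc L Leps m eps x)) \<le> Ck * N 0 (tildeL sc L Leps m eps x)"
        using Ck elim by auto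
      also have "\<dots> \<le> Ck * (e/(Ck+1) * N (m + 1) x)"
        using elim x Ck by (intro mult_left_mono) auto
      also have "\<dots> = (Ck/(Ck+1)) * (e * N (m + 1) x)" by (simp add: field_simps)
      also have "\<dots> \<le> 1 * (e * N (m + 1) x)"
        using Ck Nx e by (intro mult_right_mono) (auto simp: ratio_le1)
      also have "\<dots> \<le> e * nk (m + 1) x"
        using e N_le_nk[of "m+1" "m+1" x] by simp
      finally show "norm (ke eps (tildeL sc L Leps m eps x)) \<le> e * nk (m + 1) x" .
    qed
  qed
qed

definition rho :: "nat \<Rightarrow> real \<Rightarrow> 'k" where
  "rho m eps = (\<Sum>j=1..m. tk (m - j) eps (L j h)) + ke eps (tildeL sc L Leps m eps h)"

definition TT :: "nat \<Rightarrow> real \<Rightarrow> 'v \<Rightarrow> 'k" where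
  "TT m eps x = (\<Sum>j=1..m. lm j * tk (m - j) eps (R x)) + rho m eps * ke eps (R x)
     - (\<Sum>j=1..m. tk (m - j) eps (L j (R x))) - ke eps (tildeL sc L Leps m eps (R x))"

lemma expj:
  assumes eps: "0 < eps" and j: "j \<le> m"
  shows "of_real eps ^ j * ke eps y =
     (\<Sum>i=0..m-j. K i y * of_real eps ^ (i + j)) + of_real eps ^ m * tk (m - j) eps y"
proof -
  have "of_real eps ^ j * ke eps y = of_real eps ^ j * ((\<Sum>i=0..m-j. K i y * of_real eps ^ i) + of_real eps ^ (m - j) * tk (m - j) eps y)"
    using tk_exp[OF eps, of y "m - j"] by simp
  also have "\<dots> = (\<Sum>i=0..m-j. K i y * of_real eps ^ (i + j)) + (of_real eps ^ j * of_real eps ^ (m - j)) * tk (m - j) eps y"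
    by (simp add: distrib_left sum_distrib_left power_add mult_ac)
  also have "of_real eps ^ j * of_real eps ^ (m - j) = (of_real eps ^ m :: 'k)"
    using j by (simp add: power_add[symmetric])
  finally show ?thesis .
qed

lemma tri_pow:
  "(\<Sum>j=1..m. \<Sum>i=0..m-j. F j i * (e::'k) ^ (i + j)) = (\<Sum>k=1..m. (\<Sum>j=1..k. F j (k - j)) * e ^ k)"
proof -
  have "(\<Sum>j=1..m. \<Sum>i=0..m-j. F j i * e ^ (i + j)) = (\<Sum>k=1..m. \<Sum>j=1..k. F j (k - j) * e ^ (k - j + j))"
    by (rule tri1)
  also have "\<dots> = (\<Sum>k=1..m. (\<Sum>j=1..k. F j (k - j)) * e ^ k)"
    by (rule sum.cong[OF refl]) (auto simp: sum_distrib_right intro!: sum.cong)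
  finally show ?thesis .
qed

lemma tk_eq:
  assumes m: "m \<le> n" and x: "x \<in> B (m + 1)" and eps: "0 < eps" "eps < 1"
  shows "tk m eps x = TT m eps x"
proof -
  define e where "e = (of_real eps :: 'k)"
  have e0: "e ^ m \<noteq> 0" using eps by (simp add: e_def)
  define g where "g = R x"
  have g: "g \<in> B (m + 1)" using R_in[of "m+1" x] x m g_def by auto
  have x1: "x \<in> B 1" using in_B[of x "m+1" 1] x m by auto
  have a1: "ke eps (Leps eps g) = ke eps (Leps eps h) * ke eps g"
    using lameps_eq[OF eps, of g] unfolding lameps_eq2[OF eps] .
  have a2: "lam = ke eps (L 0 h)" using lam_eq[OF eps] .
  have s1: "ke eps x - nu x = - (ke eps (Leps eps g) - ke eps (L 0 g)) + (ke eps (Leps eps h) - ke eps (L 0 h)) * ke eps g"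
  proof -
    have "ke eps x - nu x = ke eps (L 0 g) - lam * ke eps g" using ke_R[OF x1 eps] g_def by simp
    then show ?thesis unfolding a1 a2 by (simp add: algebra_simps)
  qed
  define A where "A = (\<Sum>j=1..m. \<Sum>i=0..m-j. K i (L j g) * e ^ (i + j))"
  define A' where "A' = (\<Sum>j=1..m. \<Sum>i=0..m-j. lm j * K i g * e ^ (i + j))"
  define T1 where "T1 = (\<Sum>j=1..m. lm j * tk (m - j) eps g)"
  define T3 where "T3 = (\<Sum>j=1..m. tk (m - j) eps (L j g))"
  define T4 where "T4 = ke eps (tildeL sc L Leps m eps g)"
  define P where "P = (\<Sum>k=1..m. lm k * e ^ k)"
  have Dg: "ke eps (Leps eps g) - ke eps (L 0 g) = A + e ^ m * T3 + e ^ m * T4"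
  proof -
    have "ke eps (Leps eps g) - ke eps (L 0 g) = (\<Sum>j=1..m. e ^ j * ke eps (L j g)) + e ^ m * T4"
      using tildeL_exp[OF eps, of g m] unfolding e_def T4_def .
    also have "(\<Sum>j=1..m. e ^ j * ke eps (L j g)) = (\<Sum>j=1..m. (\<Sum>i=0..m-j. K i (L j g) * e ^ (i + j)) + e ^ m * tk (m - j) eps (L j g))"
      by (rule sum.cong[OF refl]) (use expj[OF eps(1)] in \<open>auto simp: e_def\<close>)
    also have "\<dots> = A + e ^ m * T3" unfolding A_def T3_def by (simp add: sum.distrib sum_distrib_left)
    finally show ?thesis by simp
  qed
  have Dh: "ke eps (Leps eps h) - ke eps (L 0 h) = P + e ^ m * rho m eps"
  proof -
    have "ke eps (Leps eps h) - ke eps (L 0 h) = (\<Sum>j=1..m. e ^ j * ke eps (L j h)) + e ^ m * ke eps (tildeL sc L Leps m eps h)"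
      using tildeL_exp[OF eps, of h m] unfolding e_def .
    also have "(\<Sum>j=1..m. e ^ j * ke eps (L j h)) = (\<Sum>j=1..m. (\<Sum>i=0..m-j. K i (L j h) * e ^ (i + j)) + e ^ m * tk (m - j) eps (L j h))"
      by (rule sum.cong[OF refl]) (use expj[OF eps(1)] in \<open>auto simp: e_def\<close>)
    also have "\<dots> = (\<Sum>j=1..m. \<Sum>i=0..m-j. K i (L j h) * e ^ (i + j)) + e ^ m * (\<Sum>j=1..m. tk (m - j) eps (L j h))"
      by (simp add: sum.distrib sum_distrib_left)
    also have "(\<Sum>j=1..m. \<Sum>i=0..m-j. K i (L j h) * e ^ (i + j)) = P"
      unfolding tri_pow P_def lamk_def ..
    finally show ?thesis unfolding rho_def by (simp add: distrib_left)
  qed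
  have PG: "P * ke eps g = A' + e ^ m * T1"
  proof -
    have "P * ke eps g = (\<Sum>k=1..m. lm k * (e ^ k * ke eps g))" unfolding P_def sum_distrib_right
      by (rule sum.cong[OF refl]) (simp add: mult_ac)
    also have "\<dots> = (\<Sum>k=1..m. lm k * ((\<Sum>i=0..m-k. K i g * e ^ (i + k)) + e ^ m * tk (m - k) eps g))"
      by (rule sum.cong[OF refl]) (use expj[OF eps(1)] in \<open>auto simp: e_def\<close>)
    also have "\<dots> = A' + e ^ m * T1" unfolding A'_def T1_def
      by (simp add: sum.distrib sum_distrib_left distrib_left mult_ac)
    finally show ?thesis .
  qed
  have TTe: "TT m eps x = T1 + rho m eps * ke eps g - T3 - T4"
    unfolding TT_def T1_def T3_def T4_def g_def ..
  have main: "ke eps x - nu x = (A' - A) + e ^ m * TT m eps x"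
    unfolding s1 Dg Dh TTe distrib_right PG by (simp add: algebra_simps)
  have AA: "A' - A = (\<Sum>k=1..m. K k x * e ^ k)"
  proof -
    have "A' - A = (\<Sum>j=1..m. \<Sum>i=0..m-j. (lm j * K i g - K i (L j g)) * e ^ (i + j))"
      unfolding A'_def A_def by (simp add: sum_subtractf left_diff_distrib)
    also have "\<dots> = (\<Sum>k=1..m. (\<Sum>j=1..k. lm j * K (k - j) g - K (k - j) (L j g)) * e ^ k)"
      by (rule tri_pow)
    also have "\<dots> = (\<Sum>k=1..m. K k x * e ^ k)"
    proof (rule sum.cong[OF refl])
      fix k assume k: "k \<in> {1..m}"
      have "x \<in> B k" using in_B[of x "m+1" k] x k m by auto
      then show "(\<Sum>j=1..k. lm j * K (k - j) g - K (k - j) (L j g)) * e ^ k = K k x * e ^ k"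
        using Kexp'[of k x] k m g_def by auto
    qed
    finally show ?thesis .
  qed
  have "tk m eps x = (ke eps x - nu x - (\<Sum>k=1..m. K k x * e ^ k)) / e ^ m"
    unfolding tildekappa_def e_def ..
  also have "\<dots> = TT m eps x" unfolding main AA using e0 by simp
  finally show ?thesis .
qed

end



context mt begin

lemma tk_small: "m \<le> n \<Longrightarrow> small (B (m + 1)) (nk (m + 1)) (tk m)"
proof (induction m rule: less_induct)
  case (less m)
  have IH: "\<And>j. j \<in> {1..m} \<Longrightarrow> small (B (m - j + 1)) (nk (m - j + 1)) (tk (m - j))"
    using less by auto
  have nnm: "\<forall>x\<in>B (m + 1). 0 \<le> nk (m + 1) x" using nn less.prems by auto
  have mapR: "\<And>j. j \<in> {1..m} \<Longrightarrow> mapb (B (m + 1)) (nk (m + 1)) (B (m - j + 1)) (nk (m - j + 1)) R"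
    by (rule mapb_Rk) (use less.prems in auto)
  have mapLR: "mapb (B (m + 1)) (nk (m + 1)) (B (m - j + 1)) (nk (m - j + 1)) (\<lambda>x. L j (R x))"
    if j: "j \<in> {1..m}" for j
  proof -
    have eq: "m + 1 - j = m - j + 1" using j by auto
    show ?thesis using mapb_LR[of j "m + 1"] j less.prems unfolding eq by auto
  qed
  have hB: "h \<in> B (m + 1)" using in_B[OF h_in, of "m + 1"] less.prems by auto
  have t1: "small (B (m + 1)) (nk (m + 1)) (\<lambda>eps x. \<Sum>j=1..m. lm j * tk (m - j) eps (R x))"
    by (rule small_sum[OF nnm], simp, rule ballI, rule small_cmult[OF nnm], rule small_comp[OF nnm IH mapR])
  have rs: "small0 (rho m)"
  proof -
    have "small0 (\<lambda>eps. \<Sum>j=1..m. tk (m - j) eps (L j h))"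
    proof (rule small0_sum, simp, rule ballI)
      fix j assume j: "j \<in> {1..m}"
      have eq: "m + 1 - j = m - j + 1" using j by auto
      have Lh: "L j h \<in> B (m - j + 1)"
        using L_bdd[of j "m + 1"] j less.prems hB unfolding bounded_op_def eq by auto
      show "small0 (\<lambda>eps. tk (m - j) eps (L j h))"
        by (rule small_point[OF IH[OF j] Lh]) (rule nk_nonneg, use Lh less.prems in auto)
    qed
    moreover have "small0 (\<lambda>eps. ke eps (tildeL sc L Leps m eps h))"
      by (rule small_point[OF kappa_L_small[OF less.prems] hB]) (use nnm hB in auto)
    ultimately show ?thesis unfolding rho_def[abs_def] by (rule small0_add)
  qed
  have t2: "small (B (m + 1)) (nk (m + 1)) (\<lambda>eps x. rho m eps * ke eps (R x))"
    by (rule small_mult0[OF nnm rs ebnd_comp[OF nnm _ ke_ebnd0 mapb_Rk]]) (use nn less.prems in auto)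
  have t3: "small (B (m + 1)) (nk (m + 1)) (\<lambda>eps x. \<Sum>j=1..m. tk (m - j) eps (L j (R x)))"
    by (rule small_sum[OF nnm], simp, rule ballI, rule small_comp[OF nnm IH mapLR])
  have t4: "small (B (m + 1)) (nk (m + 1)) (\<lambda>eps x. ke eps (tildeL sc L Leps m eps (R x)))"
    by (rule small_comp[OF nnm kappa_L_small[OF less.prems] mapb_Rk]) (use less.prems in auto)
  have "small (B (m + 1)) (nk (m + 1)) (TT m)"
    unfolding TT_def[abs_def] by (rule small_diff[OF small_diff[OF small_add[OF t1 t2] t3] t4])
  then show ?case
    by (rule small_cong_ev) (use ev01 in \<open>auto elim!: eventually_mono intro: tk_eq[OF less.prems]\<close>)
qed

lemma part2: "k \<le> n \<Longrightarrow> opnorm_tendsto_0 (B (k + 1)) (nk (k + 1)) norm (tk k)"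
  using tk_small unfolding small_def opnorm_tendsto_0_def opnorm_le_def .

end



lemma tri_pow0:
  "(\<Sum>j=0..m. \<Sum>i=0..m-j. F j i * (e::'k::comm_ring_1) ^ (i + j)) = (\<Sum>k=0..m. (\<Sum>j=0..k. F j (k - j)) * e ^ k)"
proof -
  have "(\<Sum>j=0..m. \<Sum>i=0..m-j. F j i * e ^ (i + j)) = (\<Sum>k=0..m. \<Sum>j=0..k. F j (k - j) * e ^ (k - j + j))"
    by (rule tri0)
  also have "\<dots> = (\<Sum>k=0..m. (\<Sum>j=0..k. F j (k - j)) * e ^ k)"
    by (rule sum.cong[OF refl]) (auto simp: sum_distrib_right intro!: sum.cong)
  finally show ?thesis .
qed

context mt begin

lemma Kdom_le: assumes "i \<le> k" "k \<le> n" shows "domb (B k) (nk k) (K i)"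
proof (cases "k = 0")
  case True
  then show ?thesis using Kdom[of 0] assms by auto
next
  case False
  show ?thesis
  proof (cases "i = 0")
    case True
    have "domb (B k) (nk k) (\<lambda>x. nu x)"
      by (rule domb_comp[OF _ _ nu_dom1 mapb_id]) (use nn assms False in auto)
    moreover have "K 0 = nu" by (rule ext) (rule K0)
    ultimately show ?thesis using True by simp
  next
    case False
    have "domb (B k) (nk k) (\<lambda>x. K i x)"
      by (rule domb_comp[OF _ _ Kdom mapb_id]) (use nn assms False in auto)
    then show ?thesis by simp
  qed
qed

lemma Klin_le: "i \<le> k \<Longrightarrow> k \<le> n \<Longrightarrow> lin_on sc (*) (B k) (K i)"
  using lin_on_subset[OF Klin[of i] B_mono[of i k]] by auto

lemma ke_tk0: "ke eps f = nu f + tk 0 eps f"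
  unfolding tildekappa_def by simp

lemma ke_ebnd_p: assumes "1 \<le> p" "p \<le> n + 1" shows "ebnd (B p) (nk p) ke"
proof -
  have nnp: "\<forall>x\<in>B p. 0 \<le> nk p x" using nn assms by auto
  have s0: "small (B 1) (nk 1) (tk 0)" using tk_small[of 0] by simp
  have a: "ebnd (B p) (nk p) (\<lambda>eps x. nu x)"
    by (rule domb_ebnd, rule domb_comp[OF nnp _ nu_dom1 mapb_id]) (use nn assms in auto)
  have b: "ebnd (B p) (nk p) (\<lambda>eps x. tk 0 eps x)"
    by (rule small_ebnd, rule small_comp[OF nnp s0 mapb_id]) (use assms in auto)
  have "ebnd (B p) (nk p) (\<lambda>eps x. nu x + tk 0 eps x)" by (rule ebnd_add[OF nnp a b])
  then show ?thesis by (simp add: ke_tk0[abs_def])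
qed

end

locale mt2 = mt sc n B N L Leps lam h nu D0 lameps nueps
  for sc :: "'k::{real_normed_field,banach} \<Rightarrow> 'v::ab_group_add \<Rightarrow> 'v" and n B N L Leps lam h nu D0 lameps nueps +
  fixes one :: 'v
  assumes one_in: "one \<in> B (n + 1)" and nu_one: "nu one = 1"
    and nueps_one: "\<forall>eps. 0 < eps \<and> eps < 1 \<longrightarrow> nueps eps one = 1"
    and ubnd: "\<exists>C. \<forall>eps. 0 < eps \<and> eps < 1 \<longrightarrow> norm (nueps eps h) \<le> C"
begin

abbreviation "cf \<equiv> cc (\<lambda>j. K j one)"

definition sig :: "nat \<Rightarrow> real \<Rightarrow> 'k" where
  "sig m eps = (nueps eps h - (\<Sum>i=0..m. cf i * of_real eps ^ i)) / of_real eps ^ m"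

lemma u_ke: "0 < eps \<Longrightarrow> eps < 1 \<Longrightarrow> nueps eps h * ke eps one = 1"
  unfolding kappa_eps_def using nueps_one nueps_h by simp

lemma u_bnd0: "bnd0 (\<lambda>eps. nueps eps h)"
proof -
  obtain C where C: "\<forall>eps. 0 < eps \<and> eps < 1 \<longrightarrow> norm (nueps eps h) \<le> C" using ubnd by auto
  have "eventually (\<lambda>eps. norm (nueps eps h) \<le> C) (at_right 0)"
    using ev01 by eventually_elim (use C in auto)
  then show ?thesis unfolding bnd0_def by blast
qed

lemma expu:
  assumes eps: "0 < eps" and j: "j \<le> m"
  shows "of_real eps ^ j * nueps eps h =
     (\<Sum>i=0..m-j. cf i * of_real eps ^ (i + j)) + of_real eps ^ m * sig (m - j) eps"
proof -
  have ne: "(of_real eps :: 'k) ^ (m - j) \<noteq> 0" using eps by simp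
  have "nueps eps h = (\<Sum>i=0..m-j. cf i * of_real eps ^ i) + of_real eps ^ (m - j) * sig (m - j) eps"
    unfolding sig_def using ne by simp
  then have "of_real eps ^ j * nueps eps h = of_real eps ^ j * ((\<Sum>i=0..m-j. cf i * of_real eps ^ i) + of_real eps ^ (m - j) * sig (m - j) eps)"
    by simp
  also have "\<dots> = (\<Sum>i=0..m-j. cf i * of_real eps ^ (i + j)) + (of_real eps ^ j * of_real eps ^ (m - j)) * sig (m - j) eps"
    by (simp add: distrib_left sum_distrib_left power_add mult_ac)
  also have "of_real eps ^ j * of_real eps ^ (m - j) = (of_real eps ^ m :: 'k)"
    using j by (simp add: power_add[symmetric])
  finally show ?thesis .
qed

lemma sig_eq:
  assumes m: "m \<le> n" and eps: "0 < eps" "eps < 1"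
  shows "sig m eps = - ((\<Sum>j=1..m. K j one * sig (m - j) eps) + nueps eps h * tk m eps one)"
proof -
  define e where "e = (of_real eps :: 'k)"
  define u where "u = nueps eps h"
  define a where "a = (\<lambda>j. K j one)"
  have e0: "e ^ m \<noteq> 0" using eps by (simp add: e_def)
  have ke1: "ke eps one = 1 + (\<Sum>j=1..m. a j * e ^ j) + e ^ m * tk m eps one"
  proof -
    have "ke eps one = (\<Sum>i=0..m. K i one * e ^ i) + e ^ m * tk m eps one"
      using tk_exp[OF eps(1)] unfolding e_def .
    also have "(\<Sum>i=0..m. K i one * e ^ i) = 1 + (\<Sum>j=1..m. a j * e ^ j)"
      by (subst sum.atLeast_Suc_atMost[of 0 m]) (auto simp: K0 nu_one a_def)
    finally show ?thesis .
  qed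
  have one: "1 = u + (\<Sum>j=1..m. a j * (e ^ j * u)) + e ^ m * (u * tk m eps one)"
  proof -
    have "1 = u * ke eps one" using u_ke[OF eps] unfolding u_def ..
    also have "\<dots> = u + (\<Sum>j=1..m. a j * (e ^ j * u)) + e ^ m * (u * tk m eps one)"
      unfolding ke1 by (simp add: algebra_simps sum_distrib_left sum_distrib_right)
    finally show ?thesis .
  qed
  have S: "(\<Sum>j=1..m. a j * (e ^ j * u)) = (\<Sum>k=1..m. - cf k * e ^ k) + e ^ m * (\<Sum>j=1..m. a j * sig (m - j) eps)"
  proof -
    have "(\<Sum>j=1..m. a j * (e ^ j * u)) = (\<Sum>j=1..m. a j * ((\<Sum>i=0..m-j. cf i * e ^ (i + j)) + e ^ m * sig (m - j) eps))"
      by (rule sum.cong[OF refl]) (use expu[OF eps(1)] in \<open>auto simp: e_def u_def\<close>)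
    also have "\<dots> = (\<Sum>j=1..m. \<Sum>i=0..m-j. (a j * cf i) * e ^ (i + j)) + e ^ m * (\<Sum>j=1..m. a j * sig (m - j) eps)"
      by (simp add: distrib_left sum.distrib sum_distrib_left mult_ac)
    also have "(\<Sum>j=1..m. \<Sum>i=0..m-j. (a j * cf i) * e ^ (i + j)) = (\<Sum>k=1..m. (\<Sum>j=1..k. a j * cf (k - j)) * e ^ k)"
      by (rule tri_pow)
    also have "\<dots> = (\<Sum>k=1..m. - cf k * e ^ k)"
      by (rule sum.cong[OF refl]) (use cc_rec[of _ "\<lambda>j. K j one"] in \<open>auto simp: a_def\<close>)
    finally show ?thesis .
  qed
  have c0: "(\<Sum>i=0..m. cf i * e ^ i) = 1 + (\<Sum>k=1..m. cf k * e ^ k)"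
    by (subst sum.atLeast_Suc_atMost[of 0 m]) (auto simp: cc_0)
  have H: "u - (\<Sum>i=0..m. cf i * e ^ i) = - (e ^ m * ((\<Sum>j=1..m. a j * sig (m - j) eps) + u * tk m eps one))"
  proof -
    have "u - (\<Sum>i=0..m. cf i * e ^ i) = u - 1 - (\<Sum>k=1..m. cf k * e ^ k)" unfolding c0 by simp
    also have "\<dots> = u - (u + (\<Sum>j=1..m. a j * (e ^ j * u)) + e ^ m * (u * tk m eps one)) - (\<Sum>k=1..m. cf k * e ^ k)"
      using one by simp
    also have "\<dots> = - (e ^ m * ((\<Sum>j=1..m. a j * sig (m - j) eps) + u * tk m eps one))"
      unfolding S by (simp add: algebra_simps sum_negf)
    finally show ?thesis .
  qed
  have "sig m eps = (u - (\<Sum>i=0..m. cf i * e ^ i)) / e ^ m" unfolding sig_def u_def e_def ..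
  also have "\<dots> = - ((\<Sum>j=1..m. a j * sig (m - j) eps) + u * tk m eps one)" unfolding H using e0 by simp
  finally show ?thesis unfolding a_def u_def .
qed

lemma sig_small: "m \<le> n \<Longrightarrow> small0 (sig m)"
proof (induction m rule: less_induct)
  case (less m)
  have oneB: "one \<in> B (m + 1)" using in_B[OF one_in, of "m + 1"] less.prems by auto
  have a: "small0 (\<lambda>eps. \<Sum>j=1..m. K j one * sig (m - j) eps)"
    by (rule small0_sum, simp, rule ballI, rule small0_cmult) (use less in auto)
  have b: "small0 (\<lambda>eps. nueps eps h * tk m eps one)"
    by (rule small0_mult_bnd0[OF u_bnd0], rule small_point[OF tk_small[OF less.prems] oneB])
      (use nn less.prems oneB in auto)
  have "small0 (\<lambda>eps. - ((\<Sum>j=1..m. K j one * sig (m - j) eps) + nueps eps h * tk m eps one))"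
    by (rule small0_uminus[OF small0_add[OF a b]])
  then show ?case
    by (rule small0_cong_ev) (rule eventually_mono[OF ev01], rule sig_eq[OF less.prems], auto)
qed

abbreviation "nuK \<equiv> nuk sc L h nu R one"

lemma nuk_eq: "nuK k f = (\<Sum>l=0..k. cf l * K (k - l) f)"
proof -
  have "nuK k f = K k f + (\<Sum>i=1..k. cf i * K (k - i) f)"
    unfolding nuk_def
  proof (rule arg_cong[where f = "\<lambda>t. K k f + t"], rule sum.cong[OF refl])
    fix i assume "i \<in> {1..k}"
    then show "(\<Sum>l=1..i. \<Sum>js\<in>compositions i l. (-1) ^ l * prod_list (map (\<lambda>j. K j one) js)) * K (k - i) f = cf i * K (k - i) f"
      using Cmp_eq[of i "\<lambda>j. K j one"] by simp
  qed
  also have "\<dots> = (\<Sum>l=0..k. cf l * K (k - l) f)"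
    by (subst sum.atLeast_Suc_atMost[of 0 k]) (auto simp: cc_0)
  finally show ?thesis .
qed

lemma part3a: "k \<le> n \<Longrightarrow> bounded_functional sc (B k) (nk k) (nuK k)"
proof -
  assume k: "k \<le> n"
  have lin: "lin_on sc (*) (B k) (\<lambda>f. \<Sum>l=0..k. cf l * K (k - l) f)"
    by (rule lin_on_sum, simp, rule ballI, rule lin_on_cmult, rule Klin_le) (use k in auto)
  have dm: "domb (B k) (nk k) (\<lambda>f. \<Sum>l=0..k. cf l * K (k - l) f)"
    by (rule domb_sum, simp, rule ballI, rule domb_cmult, rule Kdom_le) (use k in auto)
  show ?thesis
    unfolding bounded_functional_def bounded_op_def nuk_eq[abs_def] using lin dm unfolding domb_def by auto
qed

lemma tn_eq:
  assumes m: "m \<le> n" and f: "f \<in> B (m + 1)" and eps: "0 < eps" "eps < 1"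
  shows "tildenu sc L h nu R one nueps m eps f = (\<Sum>l=0..m. cf l * tk (m - l) eps f) + sig m eps * ke eps f"
proof -
  define e where "e = (of_real eps :: 'k)"
  define u where "u = nueps eps h"
  have e0: "e ^ m \<noteq> 0" using eps by (simp add: e_def)
  have nf: "nueps eps f = ke eps f * u" unfolding kappa_eps_def u_def using nueps_h[OF eps] by simp
  have uu: "u = (\<Sum>l=0..m. cf l * e ^ l) + e ^ m * sig m eps"
    unfolding sig_def u_def e_def using e0[unfolded e_def] by simp
  have "ke eps f * u = (\<Sum>l=0..m. cf l * (e ^ l * ke eps f)) + e ^ m * (sig m eps * ke eps f)"
    unfolding uu by (simp add: algebra_simps sum_distrib_left sum_distrib_right)
  also have "(\<Sum>l=0..m. cf l * (e ^ l * ke eps f)) = (\<Sum>l=0..m. cf l * ((\<Sum>i=0..m-l. K i f * e ^ (i + l)) + e ^ m * tk (m - l) eps f))"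
    by (rule sum.cong[OF refl]) (use expj[OF eps(1)] in \<open>auto simp: e_def\<close>)
  also have "\<dots> = (\<Sum>l=0..m. \<Sum>i=0..m-l. (cf l * K i f) * e ^ (i + l)) + e ^ m * (\<Sum>l=0..m. cf l * tk (m - l) eps f)"
    by (simp add: distrib_left sum.distrib sum_distrib_left mult_ac)
  also have "(\<Sum>l=0..m. \<Sum>i=0..m-l. (cf l * K i f) * e ^ (i + l)) = (\<Sum>k=0..m. (\<Sum>l=0..k. cf l * K (k - l) f) * e ^ k)"
    by (rule tri_pow0)
  also have "\<dots> = (\<Sum>k=0..m. nuK k f * e ^ k)" by (simp add: nuk_eq)
  finally have "nueps eps f = (\<Sum>k=0..m. nuK k f * e ^ k) + e ^ m * ((\<Sum>l=0..m. cf l * tk (m - l) eps f) + sig m eps * ke eps f)"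
    unfolding nf by (simp add: distrib_left add.assoc)
  then show ?thesis unfolding tildenu_def e_def[symmetric] using e0 by simp
qed

lemma part3b: "m \<le> n \<Longrightarrow> opnorm_tendsto_0 (B (m + 1)) (nk (m + 1)) norm (tildenu sc L h nu R one nueps m)"
proof -
  assume m: "m \<le> n"
  have nnm: "\<forall>x\<in>B (m + 1). 0 \<le> nk (m + 1) x" using nn m by auto
  have a: "small (B (m + 1)) (nk (m + 1)) (\<lambda>eps f. \<Sum>l=0..m. cf l * tk (m - l) eps f)"
  proof (rule small_sum[OF nnm], simp, rule ballI, rule small_cmult[OF nnm])
    fix l assume l: "l \<in> {0..m}"
    show "small (B (m + 1)) (nk (m + 1)) (tk (m - l))"
      using small_comp[OF nnm tk_small[of "m - l"] mapb_id[of "m - l + 1" "m + 1"]] l m by auto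
  qed
  have b: "small (B (m + 1)) (nk (m + 1)) (\<lambda>eps f. sig m eps * ke eps f)"
    by (rule small_mult0[OF nnm sig_small[OF m] ke_ebnd_p]) (use m in auto)
  have "small (B (m + 1)) (nk (m + 1)) (tildenu sc L h nu R one nueps m)"
    by (rule small_cong_ev[OF small_add[OF a b]]) (rule eventually_mono[OF ev01], auto intro: tn_eq[OF m])
  then show ?thesis unfolding small_def opnorm_tendsto_0_def opnorm_le_def .
qed

end



theorem mainTheorem4:
  fixes sc :: "'k::{real_normed_field,banach} \<Rightarrow> 'v::ab_group_add \<Rightarrow> 'v"
    and n :: nat
    and B :: "nat \<Rightarrow> 'v set" and N :: "nat \<Rightarrow> 'v \<Rightarrow> real"
    and L :: "nat \<Rightarrow> 'v \<Rightarrow> 'v" and Leps :: "real \<Rightarrow> 'v \<Rightarrow> 'v"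
    and lam :: 'k and h :: 'v and nu :: "'v \<Rightarrow> 'k" and D0 :: "'v set"
    and lameps :: "real \<Rightarrow> 'k" and nueps :: "real \<Rightarrow> 'v \<Rightarrow> 'k"
  assumes vs: "vector_space sc"
    and B0: "B 0 = UNIV"
    and Bsub: "\<And>k. k \<le> n + 1 \<Longrightarrow> module.subspace sc (B k)"
    and Bdec: "\<And>k. k \<le> n \<Longrightarrow> B (Suc k) \<subseteq> B k"
    \<comment> \<open>(I)\<close>
    and condI: "\<And>j i. j \<le> n \<Longrightarrow> j \<le> i \<Longrightarrow> i \<le> n \<Longrightarrow>
                  lin_on sc sc (B i) (L j) \<and> L j ` B i \<subseteq> B (i - j)"
    and Leps_lin: "\<And>eps. 0 < eps \<Longrightarrow> eps < 1 \<Longrightarrow> lin_on sc sc UNIV (Leps eps)"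
    \<comment> \<open>(II)\<close>
    and lam_ne: "lam \<noteq> 0" and h_in: "h \<in> B (n + 1)"
    and nu_lin: "lin_on sc (*) UNIV nu"
    and nu_eig: "\<And>f. nu (L 0 f) = lam * nu f"
    and h_eig: "L 0 h = sc lam h" and nu_h: "nu h = 1"
    and D0_sub: "module.subspace sc D0" and B1_D0: "B 1 \<subseteq> D0"
    and R_inv: "\<And>f. f \<in> D0 \<Longrightarrow> \<exists>!g. Rop sc (L 0) lam h nu g - sc lam g = f"
    and Rl_pres: "\<And>i. 1 \<le> i \<Longrightarrow> i \<le> n + 1 \<Longrightarrow> Rlam sc (L 0) lam h nu ` B i \<subseteq> B i"
    \<comment> \<open>(III)\<close>
    and nueps_lin: "\<And>eps. 0 < eps \<Longrightarrow> eps < 1 \<Longrightarrow> lin_on sc (*) UNIV (nueps eps)"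
    and nueps_eig: "\<And>eps f. 0 < eps \<Longrightarrow> eps < 1 \<Longrightarrow>
                      nueps eps (Leps eps f) = lameps eps * nueps eps f"
    and nueps_h: "\<And>eps. 0 < eps \<Longrightarrow> eps < 1 \<Longrightarrow> nueps eps h \<noteq> 0"
    \<comment> \<open>(a)\<close>
    and banach: "\<And>k. k \<le> n + 1 \<Longrightarrow> banach_on sc (B k) (N k)"
    \<comment> \<open>(b)\<close>
    and nu_bdd: "bounded_functional sc (B 0) (N 0) nu"
    and L_bdd: "\<And>j i. j \<le> n \<Longrightarrow> j \<le> i \<Longrightarrow> i \<le> n + 1 \<Longrightarrow>
                  bounded_op sc sc (B i) (N i) (B (i - j)) (N (i - j)) (L j)"
    and kappa_bdd: "\<exists>C. \<forall>eps. 0 < eps \<and> eps < 1 \<longrightarrow> opnorm_le (B 0) (N 0) norm (kappa_eps nueps h eps) C"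
    and Rl_bdd1: "bounded_op sc sc (B 1) (N 1) (B 0) (N 0) (Rlam sc (L 0) lam h nu)"
    and Rl_bdd: "\<And>j. 1 \<le> j \<Longrightarrow> j \<le> n + 1 \<Longrightarrow> bounded_op sc sc (B j) (N j) (B j) (N j) (Rlam sc (L 0) lam h nu)"
    \<comment> \<open>(c)\<close>
    and Lconv: "\<And>j. j \<le> n \<Longrightarrow> opnorm_tendsto_0 (B (j + 1)) (N (j + 1)) (N 0) (tildeL sc L Leps j)"
  shows "(\<forall>k\<le>n. bounded_functional sc (B k) (normk N k) (kap sc L h nu (Rlam sc (L 0) lam h nu) k)) \<and>
         (\<forall>k\<le>n. opnorm_tendsto_0 (B (k + 1)) (normk N (k + 1)) norm (tildekappa sc L h nu (Rlam sc (L 0) lam h nu) nueps k)) \<and>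
         (\<forall>one. one \<in> B (n + 1) \<and> nu one = 1 \<and> (\<forall>eps. 0 < eps \<and> eps < 1 \<longrightarrow> nueps eps one = 1) \<and>
            (\<exists>C. \<forall>eps. 0 < eps \<and> eps < 1 \<longrightarrow> norm (nueps eps h) \<le> C) \<longrightarrow>
            (\<forall>k\<le>n. bounded_functional sc (B k) (normk N k) (nuk sc L h nu (Rlam sc (L 0) lam h nu) one k)) \<and>
            (\<forall>k\<le>n. opnorm_tendsto_0 (B (k + 1)) (normk N (k + 1)) norm
                (tildenu sc L h nu (Rlam sc (L 0) lam h nu) one nueps k)))"
proof -
  have M: "mt sc n B N L Leps lam h nu D0 lameps nueps"
    by (rule mt.intro) (fact vs B0 Bsub Bdec condI Leps_lin lam_ne h_in nu_lin nu_eig h_eig nu_h D0_sub B1_D0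
        R_inv Rl_pres nueps_lin nueps_eig nueps_h banach nu_bdd L_bdd kappa_bdd Rl_bdd1 Rl_bdd Lconv)+
  interpret M: mt sc n B N L Leps lam h nu D0 lameps nueps by (rule M)
  have c3: "(\<forall>k\<le>n. bounded_functional sc (B k) (normk N k) (nuk sc L h nu (Rlam sc (L 0) lam h nu) one k)) \<and>
            (\<forall>k\<le>n. opnorm_tendsto_0 (B (k + 1)) (normk N (k + 1)) norm
                (tildenu sc L h nu (Rlam sc (L 0) lam h nu) one nueps k))"
    if one: "one \<in> B (n + 1) \<and> nu one = 1 \<and> (\<forall>eps. 0 < eps \<and> eps < 1 \<longrightarrow> nueps eps one = 1) \<and>
            (\<exists>C. \<forall>eps. 0 < eps \<and> eps < 1 \<longrightarrow> norm (nueps eps h) \<le> C)" for one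
  proof -
    interpret M2: mt2 sc n B N L Leps lam h nu D0 lameps nueps one
      by (rule mt2.intro[OF M], rule mt2_axioms.intro) (use one in auto)
    show ?thesis using M2.part3a M2.part3b by auto
  qed
  show ?thesis using M.part1 M.part2 c3 by blast
qed


end
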